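(* Let $A\in\mathbb{R}^{d\times d}$ be symmetric with $A\ge0$. Then $$WF\big(e^{-\langle\cdot,A\cdot\rangle}\big)=(\operatorname{Ker}A\setminus\{0\})\times\{0\}\subseteq T^*\mathbb{R}^d.$$
   Context: $WF$ is the Gabor wave front set of a tempered distribution on $\mathbb{R}^d$: $z_0\in T^*\mathbb{R}^d\setminus\{0\}$ is not in $WF(u)$ iff there is an open conic set $\Gamma\ni z_0$ with $\sup_{z\in\Gamma}\langle z\rangle^N|V_\varphi u(z)|<\infty$ for all $N\ge0$, where $V_\varphi u(x,\xi)=\int u(y)\overline{\varphi(y-x)}e^{-i\langle y,\xi\rangle}dy$ (pairing sense), $\varphi\in\mathscr{S}\setminus\{0\}$, $\langle z\rangle=(1+|z|^2)^{1/2}$. *)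

theory Defs
  imports "HOL-Analysis.Analysis"
begin

text \<open>Iterated directional (Frechet) derivatives along a list of directions.\<close>
fun iter_pd :: "'a::euclidean_space list \<Rightarrow> ('a \<Rightarrow> complex) \<Rightarrow> 'a \<Rightarrow> complex" where
  "iter_pd [] f = f"
| "iter_pd (v # vs) f = (\<lambda>x. frechet_derivative (iter_pd vs f) (at x) v)"

text \<open>Schwartz space: smooth functions all of whose partial derivatives decay
  faster than any power of (1 + |x|).\<close>
definition schwartz :: "('a::euclidean_space \<Rightarrow> complex) \<Rightarrow> bool" where
  "schwartz f \<longleftrightarrow>
     (\<forall>vs. set vs \<subseteq> Basis \<longrightarrow>
        (\<forall>x. iter_pd vs f differentiable (at x)) \<and>
        (\<forall>N::nat. \<exists>C. \<forall>x. (1 + norm x) ^ N * norm (iter_pd vs f x) \<le> C))"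

text \<open>Japanese bracket.\<close>
definition jbr :: "'a::real_normed_vector \<Rightarrow> real" where
  "jbr z = sqrt (1 + (norm z)\<^sup>2)"

text \<open>Short-time Fourier transform V_phi u (x, xi), for u a locally integrable function
  (here u is a bounded continuous function, regarded as a tempered distribution).\<close>
definition stft :: "('a::euclidean_space \<Rightarrow> complex) \<Rightarrow> ('a \<Rightarrow> complex) \<Rightarrow> 'a \<times> 'a \<Rightarrow> complex" where
  "stft \<phi> u z = (LINT y|lborel. u y * cnj (\<phi> (y - fst z)) * exp (- \<i> * complex_of_real (y \<bullet> snd z)))"

definition conic :: "('a::real_vector) set \<Rightarrow> bool" where
  "conic \<Gamma> \<longleftrightarrow> (\<forall>z\<in>\<Gamma>. \<forall>t::real. t > 0 \<longrightarrow> t *\<^sub>R z \<in> \<Gamma>)"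

text \<open>Gabor wave front set (with respect to the window phi).\<close>
definition gabor_WF :: "('a::euclidean_space \<Rightarrow> complex) \<Rightarrow> ('a \<Rightarrow> complex) \<Rightarrow> ('a \<times> 'a) set" where
  "gabor_WF \<phi> u = {z0. z0 \<noteq> 0 \<and>
     \<not> (\<exists>\<Gamma>. open \<Gamma> \<and> conic \<Gamma> \<and> 0 \<notin> \<Gamma> \<and> z0 \<in> \<Gamma> \<and>
           (\<forall>N::real. N \<ge> 0 \<longrightarrow> (\<exists>C. \<forall>z\<in>\<Gamma>. jbr z powr N * norm (stft \<phi> u z) \<le> C)))}"

end

theory Submission
  imports Defs "HOL-Probability.Probability"
begin

(* ---- part 1 ---- *)

lemma pow_le_fact_exp:
  fixes y :: real assumes "0 \<le> y" shows "y ^ m \<le> fact m * exp y"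
proof -
  have s: "summable (\<lambda>n. y^n /\<^sub>R fact n)" using exp_converges sums_summable by blast
  have "(\<Sum>n\<in>{m}. y^n /\<^sub>R fact n) \<le> (\<Sum>n. y^n /\<^sub>R fact n)"
    by (rule sum_le_suminf[OF s]) (use assms in auto)
  also have "\<dots> = exp y" using exp_converges sums_unique by metis
  finally have "y^m / fact m \<le> exp y" by (simp add: divide_inverse mult.commute)
  then show ?thesis by (simp add: field_simps)
qed

lemma poly_exp_bound:
  fixes a :: real assumes "0 \<le> a"
    and x: "0 \<le> x"
  shows "(a + x) ^ m * exp (- x) \<le> fact m * exp a"
proof -
  have "(a + x) ^ m \<le> fact m * exp (a + x)" using pow_le_fact_exp[of "a+x" m] assms x by simp
  then have "(a + x) ^ m * exp (- x) \<le> fact m * exp (a + x) * exp (- x)"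
    by (intro mult_right_mono) auto
  also have "\<dots> = fact m * exp a" by (simp add: exp_add[symmetric] mult.assoc exp_minus_inverse)
  finally show ?thesis .
qed

subsection \<open>Translation invariance\<close>

lemma integral_translate:
  fixes f :: "'a::euclidean_space \<Rightarrow> 'b::{banach,second_countable_topology}"
  assumes [measurable]: "f \<in> borel_measurable borel"
  shows "(\<integral>y. f (y + c) \<partial>lborel) = (\<integral>y. f y \<partial>lborel)"
proof -
  have "(\<integral>y. f y \<partial>lborel) = (\<integral>y. f y \<partial>distr lborel borel ((+) c))" by (simp add: lborel_distr_plus)
  also have "\<dots> = (\<integral>y. f (c + y) \<partial>lborel)" by (rule integral_distr) auto
  finally show ?thesis by (simp add: add.commute)
qed

lemma integrable_translate:
  fixes f :: "'a::euclidean_space \<Rightarrow> 'b::{banach,second_countable_topology}"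
  assumes [measurable]: "f \<in> borel_measurable borel"
  shows "integrable lborel (\<lambda>y. f (y + c)) \<longleftrightarrow> integrable lborel f"
proof -
  have "integrable lborel f \<longleftrightarrow> integrable (distr lborel borel ((+) c)) f" by (simp add: lborel_distr_plus)
  also have "\<dots> \<longleftrightarrow> integrable lborel (\<lambda>y. f (c + y))" by (rule integrable_distr_eq) auto
  finally show ?thesis by (simp add: add.commute)
qed

lemma nn_integral_translate:
  fixes f :: "'a::euclidean_space \<Rightarrow> ennreal"
  assumes [measurable]: "f \<in> borel_measurable borel"
  shows "(\<integral>\<^sup>+y. f (y + c) \<partial>lborel) = (\<integral>\<^sup>+y. f y \<partial>lborel)"
proof -
  have "(\<integral>\<^sup>+y. f y \<partial>lborel) = (\<integral>\<^sup>+y. f y \<partial>distr lborel borel ((+) c))" by (simp add: lborel_distr_plus)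
  also have "\<dots> = (\<integral>\<^sup>+y. f (c + y) \<partial>lborel)" by (rule nn_integral_distr) auto
  finally show ?thesis by (simp add: add.commute)
qed

subsection \<open>Integrability of inverse polynomial weights\<close>

lemma norm_sq_basis: "(norm (x::'a::euclidean_space))\<^sup>2 = (\<Sum>b\<in>Basis. (x \<bullet> b)\<^sup>2)"
proof -
  have "(norm x)\<^sup>2 = x \<bullet> x" by (rule power2_norm_eq_inner)
  also have "\<dots> = (\<Sum>b\<in>Basis. (x \<bullet> b) * (x \<bullet> b))" by (rule euclidean_inner)
  finally show ?thesis by (simp add: power2_eq_square)
qed

lemma integrable_inv_poly:
  "integrable lborel (\<lambda>y::'a::euclidean_space. 1 / (1 + (norm y)\<^sup>2) ^ DIM('a))"
proof -
  interpret P: product_sigma_finite "\<lambda>_::'a. lborel :: real measure"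
    by (simp add: product_sigma_finite_def sigma_finite_lborel)
  define T where "T = (\<lambda>f::'a\<Rightarrow>real. \<Sum>b\<in>Basis. f b *\<^sub>R b)"
  have Tb: "T f \<bullet> b = f b" if "b \<in> Basis" for f b
    using that by (simp add: T_def inner_sum_left inner_Basis if_distrib cong: if_cong)
  have i1: "integrable lborel (\<lambda>t::real. 1 / (1 + t\<^sup>2))"
    using integrable_inverse_1_plus_square
    by (simp add: set_integrable_def einterval_def divide_inverse)
  have ip: "integrable (\<Pi>\<^sub>M b\<in>(Basis::'a set). (lborel::real measure)) (\<lambda>f. \<Prod>b\<in>Basis. 1 / (1 + (f b)\<^sup>2))"
    using P.product_integrable_prod[where f="\<lambda>_ t. 1 / (1 + t\<^sup>2)" and I=Basis] i1  by simp
  have "integrable (\<Pi>\<^sub>M b\<in>(Basis::'a set). (lborel::real measure)) (\<lambda>f. 1 / (1 + (norm (T f))\<^sup>2) ^ DIM('a))"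
  proof (rule Bochner_Integration.integrable_bound[OF ip])
    show "(\<lambda>f. 1 / (1 + (norm (T f))\<^sup>2) ^ DIM('a)) \<in> borel_measurable (\<Pi>\<^sub>M b\<in>Basis. lborel)"
      unfolding T_def by measurable
    show "AE f in \<Pi>\<^sub>M b\<in>Basis. lborel. norm (1 / (1 + (norm (T f))\<^sup>2) ^ DIM('a))
            \<le> norm (\<Prod>b\<in>Basis. 1 / (1 + (f b)\<^sup>2))"
    proof (intro AE_I2)
      fix f :: "'a \<Rightarrow> real"
      have le: "(\<Prod>b\<in>Basis. 1 + (f b)\<^sup>2) \<le> (\<Prod>b\<in>(Basis::'a set). 1 + (norm (T f))\<^sup>2)"
      proof (rule prod_mono, safe)
        fix b :: 'a assume b: "b \<in> Basis"
        have "(f b)\<^sup>2 = (T f \<bullet> b)\<^sup>2" using Tb[OF b] by simp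
        also have "\<dots> \<le> (\<Sum>b\<in>Basis. (T f \<bullet> b)\<^sup>2)"
          by (rule member_le_sum) (use b in auto)
        finally show "1 + (f b)\<^sup>2 \<le> 1 + (norm (T f))\<^sup>2" by (simp add: norm_sq_basis)
      qed (auto intro: add_nonneg_nonneg)
      have pos: "0 < (\<Prod>b\<in>(Basis::'a set). 1 + (f b)\<^sup>2)" by (intro prod_pos) (auto intro: add_pos_nonneg)
      have "1 / (1 + (norm (T f))\<^sup>2) ^ DIM('a) \<le> 1 / (\<Prod>b\<in>Basis. 1 + (f b)\<^sup>2)"
        using le pos by (intro divide_left_mono) (auto simp: prod_constant)
      also have "\<dots> = (\<Prod>b\<in>Basis. 1 / (1 + (f b)\<^sup>2))" by (simp add: prod_dividef)
      finally show "norm (1 / (1 + (norm (T f))\<^sup>2) ^ DIM('a)) \<le> norm (\<Prod>b\<in>Basis. 1 / (1 + (f b)\<^sup>2))"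
        by (simp add: abs_of_nonneg prod_nonneg)
    qed
  qed
  then have "integrable (distr (\<Pi>\<^sub>M b\<in>Basis. lborel) borel T) (\<lambda>y::'a. 1 / (1 + (norm y)\<^sup>2) ^ DIM('a))"
    by (subst integrable_distr_eq) (auto simp: T_def)
  then show ?thesis by (simp add: lborel_eq[symmetric] T_def)
qed


(* ---- part 2 ---- *)

locale psdmat =
  fixes A :: "real^'n^'n"
  assumes symA: "transpose A = A" and psdA: "\<forall>x. 0 \<le> x \<bullet> (A *v x)"
begin

definition q :: "real^'n \<Rightarrow> real" where "q x = x \<bullet> (A *v x)"
definition Bf :: "real^'n \<Rightarrow> real^'n \<Rightarrow> real" where "Bf x y = x \<bullet> (A *v y)"

lemma Bf_sym: "Bf x y = Bf y x"
proof -
  have "x \<bullet> (A *v y) = (x v* A) \<bullet> y" by (simp add: dot_lmul_matrix)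
  also have "x v* A = transpose A *v x" by simp
  also have "\<dots> = A *v x" by (simp add: symA)
  finally show ?thesis by (simp add: Bf_def inner_commute)
qed

lemma q_nonneg: "0 \<le> q x" using psdA by (simp add: q_def)

lemma q_add: "q (x + y) = q x + 2 * Bf x y + q y"
proof -
  have "q (x + y) = q x + Bf x y + Bf y x + q y"
    by (simp add: q_def Bf_def matrix_vector_right_distrib inner_add_left inner_add_right)
  then show ?thesis using Bf_sym[of y x] by simp
qed

lemma q_scale: "q (c *\<^sub>R x) = c\<^sup>2 * q x"
  by (simp add: q_def matrix_vector_mult_scaleR power2_eq_square)

lemma q_minus: "q (- x) = q x"
  by (simp add: q_def vec.neg)

lemma Bf_minus: "Bf x (- y) = - Bf x y"
  by (simp add: Bf_def vec.neg)

lemma q_diff: "q (x - y) = q x - 2 * Bf x y + q y"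
  using q_add[of x "- y"] by (simp add: q_minus Bf_minus)

lemma q_add_le: "q (x + y) \<le> 2 * q x + 2 * q y"
  using q_add[of x y] q_diff[of x y] q_nonneg[of "x - y"] by linarith

lemma Bf_scale: "Bf x (c *\<^sub>R y) = c * Bf x y"
  by (simp add: Bf_def matrix_vector_mult_scaleR)

lemma CS: "(Bf x y)\<^sup>2 \<le> q x * q y"
proof (cases "q y = 0")
  case True
  have "Bf x y = 0"
  proof (rule ccontr)
    assume ne: "Bf x y \<noteq> 0"
    define t where "t = - (q x + 1) / (2 * Bf x y)"
    have "0 \<le> q (x + t *\<^sub>R y)" by (rule q_nonneg)
    also have "\<dots> = q x + 2 * t * Bf x y" using q_add[of x "t *\<^sub>R y"] True
      by (simp add: Bf_scale q_scale)
    also have "\<dots> = -1" using ne by (simp add: t_def field_simps)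
    finally show False by simp
  qed
  then show ?thesis using True by simp
next
  case False
  then have qy: "q y > 0" using q_nonneg[of y] by simp
  define t where "t = - Bf x y / q y"
  have "0 \<le> q (x + t *\<^sub>R y)" by (rule q_nonneg)
  also have "\<dots> = q x + 2 * t * Bf x y + t\<^sup>2 * q y" using q_add[of x "t *\<^sub>R y"]
    by (simp add: Bf_scale q_scale)
  also have "\<dots> = q x - (Bf x y)\<^sup>2 / q y" using qy by (simp add: t_def field_simps power2_eq_square)
  finally have "(Bf x y)\<^sup>2 / q y \<le> q x" by simp
  then show ?thesis using qy by (simp add: field_simps)
qed

lemma q_zero: assumes "q x = 0" shows "A *v x = 0"
proof -
  have "Bf x (A *v x) = (A *v x) \<bullet> (A *v x)"
    using Bf_sym[of x "A *v x"] by (simp add: Bf_def inner_commute)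
  moreover have "(Bf x (A *v x))\<^sup>2 \<le> 0" using CS[of x "A *v x"] assms by simp
  ultimately have "(A *v x) \<bullet> (A *v x) = 0" by simp
  then show ?thesis by simp
qed

lemma q_pos: "A *v x \<noteq> 0 \<Longrightarrow> q x > 0"
  using q_zero q_nonneg[of x] by force

lemma q_ker: assumes "A *v x = 0" shows "q (y + x) = q y"
  using q_add[of y x] assms by (simp add: Bf_def q_def)

lemma q_le: "q x \<le> onorm ((*v) A) * (norm x)\<^sup>2"
proof -
  have "q x \<le> norm x * norm (A *v x)" unfolding q_def by (rule order_trans[OF _ norm_cauchy_schwarz]) simp
  also have "\<dots> \<le> norm x * (onorm ((*v) A) * norm x)"
    by (intro mult_left_mono onorm) auto
  finally show ?thesis by (simp add: power2_eq_square mult_ac)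
qed

lemma onorm_nonneg: "0 \<le> onorm ((*v) A)" by (intro onorm_pos_le) auto

lemma q_cont [continuous_intros]: "continuous_on S q"
  unfolding q_def by (intro continuous_intros linear_continuous_on) auto

lemma q_meas [measurable]: "q \<in> borel_measurable borel"
  by (intro borel_measurable_continuous_onI q_cont)

end

subsection \<open>Schwartz functions\<close>

lemma schwartz_diff: "schwartz f \<Longrightarrow> set vs \<subseteq> Basis \<Longrightarrow> iter_pd vs f differentiable (at x)"
  by (simp add: schwartz_def)

lemma schwartz_cont: "schwartz f \<Longrightarrow> set vs \<subseteq> Basis \<Longrightarrow> continuous_on S (iter_pd vs f)"
  by (meson continuous_at_imp_continuous_on differentiable_imp_continuous_within schwartz_diff)

lemma schwartz_meas: "schwartz f \<Longrightarrow> set vs \<subseteq> Basis \<Longrightarrow> iter_pd vs f \<in> borel_measurable borel"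
  by (intro borel_measurable_continuous_onI schwartz_cont)

lemma schwartz_bound: "schwartz f \<Longrightarrow> set vs \<subseteq> Basis \<Longrightarrow> \<exists>C. \<forall>x. (1 + norm x) ^ N * norm (iter_pd vs f x) \<le> C"
  by (simp add: schwartz_def)

lemma schwartz_integrable:
  fixes f :: "'a::euclidean_space \<Rightarrow> complex"
  assumes S: "schwartz f" and vs: "set vs \<subseteq> Basis"
  shows "integrable lborel (\<lambda>y. (1 + (norm y)\<^sup>2) ^ k * norm (iter_pd vs f y))"
proof -
  obtain C where C: "\<And>x. (1 + norm x) ^ (2 * (k + DIM('a))) * norm (iter_pd vs f x) \<le> C"
    using schwartz_bound[OF S vs] by blast
  have [measurable]: "iter_pd vs f \<in> borel_measurable borel" by (rule schwartz_meas[OF S vs])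
  have C0: "0 \<le> C" by (rule order_trans[OF _ C[of 0]]) simp
  show ?thesis
  proof (rule Bochner_Integration.integrable_bound[OF integrable_mult_right[OF integrable_inv_poly, of C]])
    show "(\<lambda>y. (1 + (norm y)\<^sup>2) ^ k * norm (iter_pd vs f y)) \<in> borel_measurable lborel" by simp
    show "AE x in lborel. norm ((1 + (norm x)\<^sup>2) ^ k * norm (iter_pd vs f x))
            \<le> norm (C * (1 / (1 + (norm x)\<^sup>2) ^ DIM('a)))"
    proof (intro AE_I2)
      fix x :: 'a
      have p: "0 < (1 + (norm x)\<^sup>2) ^ DIM('a)" by (intro zero_less_power) (auto intro: add_pos_nonneg)
      have "1 + (norm x)\<^sup>2 \<le> (1 + norm x)\<^sup>2" by (simp add: power2_eq_square algebra_simps)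
      then have "(1 + (norm x)\<^sup>2) ^ (k + DIM('a)) \<le> ((1 + norm x)\<^sup>2) ^ (k + DIM('a))"
        by (intro power_mono) auto
      also have "\<dots> = (1 + norm x) ^ (2 * (k + DIM('a)))" by (simp only: power_mult[symmetric])
      finally have "(1 + (norm x)\<^sup>2) ^ k * norm (iter_pd vs f x) * (1 + (norm x)\<^sup>2) ^ DIM('a) \<le> C"
        using C[of x] by (smt (verit, ccfv_SIG) mult.assoc mult.commute mult_right_mono norm_ge_zero power_add)
      then have "(1 + (norm x)\<^sup>2) ^ k * norm (iter_pd vs f x) \<le> C * (1 / (1 + (norm x)\<^sup>2) ^ DIM('a))"
        using p by (simp add: field_simps)
      moreover have "0 \<le> (1 + (norm x)\<^sup>2) ^ k * norm (iter_pd vs f x)" by (intro mult_nonneg_nonneg) auto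
      ultimately show "norm ((1 + (norm x)\<^sup>2) ^ k * norm (iter_pd vs f x))
            \<le> norm (C * (1 / (1 + (norm x)\<^sup>2) ^ DIM('a)))" using C0 by simp
    qed
  qed
qed


(* ---- part 3 ---- *)

definition derseq :: "'a::euclidean_space \<Rightarrow> (nat \<Rightarrow> 'a \<Rightarrow> complex) \<Rightarrow> bool" where
  "derseq b F \<longleftrightarrow> (\<forall>j y t. ((\<lambda>s. F j (y + s *\<^sub>R b)) has_vector_derivative F (Suc j) (y + t *\<^sub>R b)) (at t))
      \<and> (\<forall>j. continuous_on UNIV (F j))"

lemma derseqI0:
  assumes "\<And>j y. ((\<lambda>s. F j (y + s *\<^sub>R b)) has_vector_derivative F (Suc j) y) (at 0)"
    and "\<And>j. continuous_on UNIV (F j)"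
  shows "derseq b F"
  unfolding derseq_def
proof (intro conjI allI)
  fix j y t
  have "((\<lambda>s. F j ((y + t *\<^sub>R b) + s *\<^sub>R b)) has_vector_derivative F (Suc j) (y + t *\<^sub>R b)) (at 0)"
    by (rule assms(1))
  moreover have "((\<lambda>s. s - t) has_vector_derivative 1) (at t)"
    by (auto intro!: derivative_eq_intros)
  ultimately have "((\<lambda>s. F j ((y + t *\<^sub>R b) + s *\<^sub>R b)) \<circ> (\<lambda>s. s - t) has_vector_derivative
      1 *\<^sub>R F (Suc j) (y + t *\<^sub>R b)) (at t)"
    by (intro vector_diff_chain_at) auto
  moreover have "(\<lambda>s. F j ((y + t *\<^sub>R b) + s *\<^sub>R b)) \<circ> (\<lambda>s. s - t) = (\<lambda>s. F j (y + s *\<^sub>R b))"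
    by (auto simp: algebra_simps)
  ultimately show "((\<lambda>s. F j (y + s *\<^sub>R b)) has_vector_derivative F (Suc j) (y + t *\<^sub>R b)) (at t)"
    by simp
qed (use assms in auto)

lemma derseq_ftc:
  assumes "derseq b F" "0 < r"
  shows "((\<lambda>s. F (Suc j) (y + s *\<^sub>R b)) has_integral (F j y - F j (y - r *\<^sub>R b))) {-r..0}"
proof -
  have "((\<lambda>s. F (Suc j) (y + s *\<^sub>R b)) has_integral ((\<lambda>s. F j (y + s *\<^sub>R b)) 0 - (\<lambda>s. F j (y + s *\<^sub>R b)) (-r))) {-r..0}"
    by (rule fundamental_theorem_of_calculus) (use assms in \<open>auto simp: derseq_def intro: has_vector_derivative_at_within\<close>)
  then show ?thesis by simp
qed

lemma derseq_mvt:
  assumes F: "derseq b F" and r: "0 < r" and M: "\<And>y. norm (F (Suc j) y) \<le> M"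
  shows "norm (F j y - F j (y - r *\<^sub>R b)) \<le> r * M"
proof -
  have M0: "0 \<le> M" using M[of 0] norm_ge_zero order_trans by blast
  have "norm (F j y - F j (y - r *\<^sub>R b)) \<le> M * Henstock_Kurzweil_Integration.content (cbox (-r) 0)"
    by (rule has_integral_bound[OF M0]) (use derseq_ftc[OF F r] M in auto)
  then show ?thesis using r by (simp add: mult.commute)
qed

lemma derseq_L1:
  assumes F: "derseq b F" and r: "0 < r"
  shows "(\<integral>\<^sup>+y. norm (F j y - F j (y - r *\<^sub>R b)) \<partial>lborel) \<le> r * (\<integral>\<^sup>+y. norm (F (Suc j) y) \<partial>lborel)"
proof -
  let ?G = "F (Suc j)"
  have cG: "continuous_on UNIV ?G" using F by (simp add: derseq_def)
  have [measurable]: "?G \<in> borel_measurable borel" by (rule borel_measurable_continuous_onI[OF cG])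
  have pt: "ennreal (norm (F j y - F j (y - r *\<^sub>R b))) \<le> (\<integral>\<^sup>+s. indicator {-r..0} s * ennreal (norm (?G (y + s *\<^sub>R b))) \<partial>lborel)" for y
  proof -
    have ci: "continuous_on {-r..0} (\<lambda>s. ?G (y + s *\<^sub>R b))"
      by (intro continuous_on_compose2[OF cG] continuous_intros) auto
    have int1: "(\<lambda>s. norm (?G (y + s *\<^sub>R b))) integrable_on {-r..0}"
      by (intro integrable_continuous_interval continuous_on_norm ci)
    have "norm (F j y - F j (y - r *\<^sub>R b)) = norm (integral {-r..0} (\<lambda>s. ?G (y + s *\<^sub>R b)))"
      using derseq_ftc[OF F r, of j y] by (simp add: integral_unique)
    also have "\<dots> \<le> integral {-r..0} (\<lambda>s. norm (?G (y + s *\<^sub>R b)))"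
      by (rule integral_norm_bound_integral) (auto intro: integrable_continuous_interval ci int1)
    finally have "ennreal (norm (F j y - F j (y - r *\<^sub>R b))) \<le> ennreal (integral {-r..0} (\<lambda>s. norm (?G (y + s *\<^sub>R b))))"
      by (rule ennreal_leI)
    also have "ennreal (integral {-r..0} (\<lambda>s. norm (?G (y + s *\<^sub>R b))))
       = (\<integral>\<^sup>+s. ennreal (indicator {-r..0} s * norm (?G (y + s *\<^sub>R b))) \<partial>lborel)"
      by (rule nn_integral_has_integral_lebesgue[symmetric]) (auto intro: integrable_integral int1)
    finally show ?thesis by (simp add: indicator_mult_ennreal mult.commute)
  qed
  have PS: "pair_sigma_finite (lborel :: real measure) (lborel :: 'a measure)"
    by (intro pair_sigma_finite.intro sigma_finite_lborel)
  have "(\<integral>\<^sup>+y. norm (F j y - F j (y - r *\<^sub>R b)) \<partial>lborel)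
      \<le> (\<integral>\<^sup>+y. \<integral>\<^sup>+s. indicator {-r..0} s * ennreal (norm (?G (y + s *\<^sub>R b))) \<partial>lborel \<partial>lborel)"
    by (intro nn_integral_mono pt)
  also have "\<dots> = (\<integral>\<^sup>+s. \<integral>\<^sup>+y. indicator {-r..0} s * ennreal (norm (?G (y + s *\<^sub>R b))) \<partial>lborel \<partial>lborel)"
    by (rule pair_sigma_finite.Fubini'[OF PS]) measurable
  also have "\<dots> = (\<integral>\<^sup>+s. indicator {-r..0} s * (\<integral>\<^sup>+y. ennreal (norm (?G y)) \<partial>lborel) \<partial>lborel)"
  proof (intro nn_integral_cong)
    fix s :: real
    have "(\<integral>\<^sup>+y. indicator {-r..0} s * ennreal (norm (?G (y + s *\<^sub>R b))) \<partial>lborel)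
        = indicator {-r..0} s * (\<integral>\<^sup>+y. ennreal (norm (?G (y + s *\<^sub>R b))) \<partial>lborel)"
      by (rule nn_integral_cmult) measurable
    also have "(\<integral>\<^sup>+y. ennreal (norm (?G (y + s *\<^sub>R b))) \<partial>lborel) = (\<integral>\<^sup>+y. ennreal (norm (?G y)) \<partial>lborel)"
      by (rule nn_integral_translate[where f = "\<lambda>y. ennreal (norm (?G y))"]) measurable
    finally show "(\<integral>\<^sup>+y. indicator {-r..0} s * ennreal (norm (?G (y + s *\<^sub>R b))) \<partial>lborel)
        = indicator {-r..0} s * (\<integral>\<^sup>+y. ennreal (norm (?G y)) \<partial>lborel)" .
  qed
  also have "\<dots> = (\<integral>\<^sup>+y. ennreal (norm (?G y)) \<partial>lborel) * r"
    using r by (simp add: nn_integral_multc mult.commute)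
  finally show ?thesis by (simp add: mult.commute)
qed

definition Dl :: "'a::euclidean_space \<Rightarrow> ('a \<Rightarrow> complex) \<Rightarrow> 'a \<Rightarrow> complex" where
  "Dl h f = (\<lambda>y. f y - f (y - h))"

lemma Dl_add: "Dl h (\<lambda>y. f y + g y) = (\<lambda>y. Dl h f y + Dl h g y)"
  unfolding Dl_def by (rule ext) simp

lemma Dl_pow_add: "(Dl h ^^ K) (\<lambda>y. f y + g y) = (\<lambda>y. (Dl h ^^ K) f y + (Dl h ^^ K) g y)"
proof (induction K)
  case (Suc K)
  show ?case by (simp only: funpow.simps comp_def Suc.IH Dl_add)
qed simp

lemma Dl_cont: assumes "continuous_on UNIV f" shows "continuous_on UNIV (Dl h f)"
proof -
  have "continuous_on UNIV (\<lambda>y. f (y - h))"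
    by (rule continuous_on_compose2[OF assms]) (auto intro: continuous_intros)
  then show ?thesis unfolding Dl_def by (intro continuous_on_diff assms)
qed

lemma Dl_pow_cont: "continuous_on UNIV f \<Longrightarrow> continuous_on UNIV ((Dl h ^^ K) f)"
  by (induction K) (auto intro: Dl_cont)

lemma derseq_Dl:
  assumes "derseq b F" shows "derseq b (\<lambda>j. Dl h (F j))"
  unfolding derseq_def
proof (intro conjI allI)
  fix j y t
  have 1: "((\<lambda>s. F j (y + s *\<^sub>R b)) has_vector_derivative F (Suc j) (y + t *\<^sub>R b)) (at t)"
    using assms by (simp add: derseq_def)
  have 2: "((\<lambda>s. F j ((y - h) + s *\<^sub>R b)) has_vector_derivative F (Suc j) ((y - h) + t *\<^sub>R b)) (at t)"
    using assms unfolding derseq_def by blast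
  have 3: "((\<lambda>s. F j (y + s *\<^sub>R b) - F j ((y - h) + s *\<^sub>R b)) has_vector_derivative
      F (Suc j) (y + t *\<^sub>R b) - F (Suc j) ((y - h) + t *\<^sub>R b)) (at t)"
    by (rule has_vector_derivative_diff[OF 1 2])
  have e: "\<And>s. (y - h) + s *\<^sub>R b = y + s *\<^sub>R b - h" by (simp add: algebra_simps)
  show "((\<lambda>s. Dl h (F j) (y + s *\<^sub>R b)) has_vector_derivative Dl h (F (Suc j)) (y + t *\<^sub>R b)) (at t)"
    using 3 unfolding Dl_def e .
next
  fix j show "continuous_on UNIV (Dl h (F j))" using assms by (intro Dl_cont) (simp add: derseq_def)
qed

lemma derseq_Tr:
  assumes "derseq b F" shows "derseq b (\<lambda>j y. F j (y - h))"
  unfolding derseq_def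
proof (intro conjI allI)
  fix j y t
  have 2: "((\<lambda>s. F j ((y - h) + s *\<^sub>R b)) has_vector_derivative F (Suc j) ((y - h) + t *\<^sub>R b)) (at t)"
    using assms unfolding derseq_def by blast
  have e: "\<And>s. (y - h) + s *\<^sub>R b = y + s *\<^sub>R b - h" by (simp add: algebra_simps)
  show "((\<lambda>s. F j (y + s *\<^sub>R b - h)) has_vector_derivative F (Suc j) (y + t *\<^sub>R b - h)) (at t)"
    using 2 unfolding e .
next
  fix j
  have c: "continuous_on UNIV (F j)" using assms by (simp add: derseq_def)
  show "continuous_on UNIV (\<lambda>y. F j (y - h))"
    by (rule continuous_on_compose2[OF c]) (auto intro: continuous_intros)
qed

lemma derseq_cont: "derseq b F \<Longrightarrow> continuous_on UNIV (F j)"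
  by (simp add: derseq_def)

lemma Dl_prod_bound:
  assumes r: "0 < r"
  shows "derseq b F \<Longrightarrow> derseq b G \<Longrightarrow> (\<And>j y. j \<le> K \<Longrightarrow> norm (F j y) \<le> M)
     \<Longrightarrow> (\<And>j. j \<le> K \<Longrightarrow> (\<integral>\<^sup>+y. norm (G j y) \<partial>lborel) \<le> ennreal L) \<Longrightarrow> 0 \<le> M \<Longrightarrow> 0 \<le> L
     \<Longrightarrow> (\<integral>\<^sup>+y. norm ((Dl (r *\<^sub>R b) ^^ K) (\<lambda>y. F 0 y * G 0 y) y) \<partial>lborel) \<le> ennreal ((2*r)^K * M * L)"
proof (induction K arbitrary: F G M L)
  case 0
  have [measurable]: "G 0 \<in> borel_measurable borel"
    using 0 by (intro borel_measurable_continuous_onI derseq_cont)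
  have "(\<integral>\<^sup>+y. norm (F 0 y * G 0 y) \<partial>lborel) \<le> (\<integral>\<^sup>+y. ennreal M * norm (G 0 y) \<partial>lborel)"
  proof (intro nn_integral_mono)
    fix y
    have "norm (F 0 y * G 0 y) \<le> M * norm (G 0 y)"
      using 0(3)[of 0 y] by (simp add: norm_mult mult_right_mono)
    then show "ennreal (norm (F 0 y * G 0 y)) \<le> ennreal M * ennreal (norm (G 0 y))"
      using 0 by (simp add: ennreal_mult[symmetric] ennreal_leI)
  qed
  also have "\<dots> = ennreal M * (\<integral>\<^sup>+y. norm (G 0 y) \<partial>lborel)"
    by (rule nn_integral_cmult) measurable
  also have "\<dots> \<le> ennreal M * ennreal L" using 0(4)[of 0] by (intro mult_left_mono) auto
  finally show ?case using 0 by (simp add: ennreal_mult[symmetric])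
next
  case (Suc K F G M L)
  define h where "h = r *\<^sub>R b"
  define F' where "F' = (\<lambda>j. Dl h (F j))"
  define G' where "G' = (\<lambda>j. Dl h (G j))"
  define G'' where "G'' = (\<lambda>j y. G j (y - h))"
  have dF': "derseq b F'" unfolding F'_def by (rule derseq_Dl) fact
  have dG': "derseq b G'" unfolding G'_def by (rule derseq_Dl) fact
  have dG'': "derseq b G''" unfolding G''_def by (rule derseq_Tr) fact
  have cF: "continuous_on UNIV (F j)" "continuous_on UNIV (G j)" for j
    using Suc.prems by (auto intro: derseq_cont)
  have split: "Dl h (\<lambda>y. F 0 y * G 0 y) = (\<lambda>y. F 0 y * G' 0 y + F' 0 y * G'' 0 y)"
    unfolding Dl_def F'_def G'_def G''_def by (rule ext) (simp add: ring_distribs)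
  have eq: "(Dl h ^^ Suc K) (\<lambda>y. F 0 y * G 0 y) = (\<lambda>y. (Dl h ^^ K) (\<lambda>y. F 0 y * G' 0 y) y + (Dl h ^^ K) (\<lambda>y. F' 0 y * G'' 0 y) y)"
    by (simp only: funpow_Suc_right comp_def split Dl_pow_add)
  have m1 [measurable]: "(Dl h ^^ K) (\<lambda>y. F 0 y * G' 0 y) \<in> borel_measurable borel"
    by (intro borel_measurable_continuous_onI Dl_pow_cont continuous_intros derseq_cont[OF dG'] cF)
  have m2 [measurable]: "(Dl h ^^ K) (\<lambda>y. F' 0 y * G'' 0 y) \<in> borel_measurable borel"
    by (intro borel_measurable_continuous_onI Dl_pow_cont continuous_intros derseq_cont[OF dG''] derseq_cont[OF dF'])
  have b1: "(\<integral>\<^sup>+y. norm ((Dl h ^^ K) (\<lambda>y. F 0 y * G' 0 y) y) \<partial>lborel) \<le> ennreal ((2*r)^K * M * (r * L))"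
    unfolding h_def
  proof (rule Suc.IH[OF Suc.prems(1) dG'[unfolded h_def]])
    show "norm (F j y) \<le> M" if "j \<le> K" for j y using Suc.prems(3) that by simp
    show "(\<integral>\<^sup>+y. norm (G' j y) \<partial>lborel) \<le> ennreal (r * L)" if "j \<le> K" for j
    proof -
      have "(\<integral>\<^sup>+y. norm (G' j y) \<partial>lborel) \<le> r * (\<integral>\<^sup>+y. norm (G (Suc j) y) \<partial>lborel)"
        unfolding G'_def Dl_def h_def by (rule derseq_L1[OF Suc.prems(2) r])
      also have "\<dots> \<le> ennreal r * ennreal L" using Suc.prems(4)[of "Suc j"] that by (intro mult_left_mono) auto
      finally show ?thesis using r Suc.prems(6) by (simp add: ennreal_mult)
    qed
  qed (use Suc.prems r in auto)
  have b2: "(\<integral>\<^sup>+y. norm ((Dl h ^^ K) (\<lambda>y. F' 0 y * G'' 0 y) y) \<partial>lborel) \<le> ennreal ((2*r)^K * (r * M) * L)"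
    unfolding h_def
  proof (rule Suc.IH[OF dF'[unfolded h_def] dG''[unfolded h_def]])
    show "norm (F' j y) \<le> r * M" if "j \<le> K" for j y
      unfolding F'_def Dl_def h_def by (rule derseq_mvt[OF Suc.prems(1) r]) (use Suc.prems(3) that in auto)
    show "(\<integral>\<^sup>+y. norm (G'' j y) \<partial>lborel) \<le> ennreal L" if "j \<le> K" for j
    proof -
      have [measurable]: "G j \<in> borel_measurable borel" by (intro borel_measurable_continuous_onI cF)
      have "(\<integral>\<^sup>+y. norm (G'' j y) \<partial>lborel) = (\<integral>\<^sup>+y. norm (G j y) \<partial>lborel)"
        unfolding G''_def using nn_integral_translate[where f="\<lambda>y. ennreal (norm (G j y))" and c="- h"] by simp
      then show ?thesis using Suc.prems(4)[of j] that by simp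
    qed
  qed (use Suc.prems r in auto)
  have "(\<integral>\<^sup>+y. norm ((Dl h ^^ Suc K) (\<lambda>y. F 0 y * G 0 y) y) \<partial>lborel)
      \<le> (\<integral>\<^sup>+y. ennreal (norm ((Dl h ^^ K) (\<lambda>y. F 0 y * G' 0 y) y)) + ennreal (norm ((Dl h ^^ K) (\<lambda>y. F' 0 y * G'' 0 y) y)) \<partial>lborel)"
    unfolding eq by (intro nn_integral_mono) (simp add: ennreal_plus[symmetric] norm_triangle_ineq del: ennreal_plus)
  also have "\<dots> = (\<integral>\<^sup>+y. norm ((Dl h ^^ K) (\<lambda>y. F 0 y * G' 0 y) y) \<partial>lborel) + (\<integral>\<^sup>+y. norm ((Dl h ^^ K) (\<lambda>y. F' 0 y * G'' 0 y) y) \<partial>lborel)"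
    by (rule nn_integral_add) measurable
  also have "\<dots> \<le> ennreal ((2*r)^K * M * (r * L)) + ennreal ((2*r)^K * (r * M) * L)"
    by (intro add_mono b1 b2)
  also have "\<dots> = ennreal ((2*r)^Suc K * M * L)"
    using r Suc.prems by (subst ennreal_plus[symmetric]) (auto simp: algebra_simps)
  finally show ?case unfolding h_def .
qed


(* ---- part 4 ---- *)

definition ft :: "('a::euclidean_space \<Rightarrow> complex) \<Rightarrow> 'a \<Rightarrow> complex" where
  "ft f \<xi> = (\<integral>y. f y * exp (- \<i> * complex_of_real (y \<bullet> \<xi>)) \<partial>lborel)"

lemma norm_exp_ii [simp]: "norm (exp (- \<i> * complex_of_real t)) = 1"
  by (simp add: norm_exp_i_times[of "- t", simplified])

lemma integrable_mult_exp:
  fixes f :: "'a::euclidean_space \<Rightarrow> complex"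
  assumes [measurable]: "f \<in> borel_measurable borel" and i: "integrable lborel f"
  shows "integrable lborel (\<lambda>y. f y * exp (- \<i> * complex_of_real (y \<bullet> \<xi>)))"
  by (rule Bochner_Integration.integrable_bound[OF i]) (auto simp: norm_mult)

lemma Dl_meas: assumes [measurable]: "f \<in> borel_measurable borel" shows "Dl h f \<in> borel_measurable borel"
proof -
  have "(\<lambda>x. x - h) \<in> borel_measurable borel" by (intro borel_measurable_continuous_onI continuous_intros)
  then have [measurable]: "(\<lambda>x. f (x - h)) \<in> borel_measurable borel" using measurable_compose assms by blast
  show ?thesis unfolding Dl_def by measurable
qed

lemma Dl_integrable:
  fixes f :: "'a::euclidean_space \<Rightarrow> complex"
  assumes [measurable]: "f \<in> borel_measurable borel" and i: "integrable lborel f"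
  shows "integrable lborel (Dl h f)"
proof -
  have "integrable lborel (\<lambda>y. f (y + (- h)))" using i by (subst integrable_translate) auto
  then show ?thesis unfolding Dl_def using i by (intro Bochner_Integration.integrable_diff) auto
qed

lemma Dl_pow_meas_int:
  fixes f :: "'a::euclidean_space \<Rightarrow> complex"
  assumes "f \<in> borel_measurable borel" and "integrable lborel f"
  shows "(Dl h ^^ K) f \<in> borel_measurable borel \<and> integrable lborel ((Dl h ^^ K) f)"
  using assms by (induction K) (auto intro: Dl_meas Dl_integrable)

lemma ft_Dl:
  fixes f :: "'a::euclidean_space \<Rightarrow> complex"
  assumes [measurable]: "f \<in> borel_measurable borel" and i: "integrable lborel f"
    and s: "\<xi> \<bullet> b \<noteq> 0" and r: "r = pi / \<bar>\<xi> \<bullet> b\<bar>"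
  shows "ft (Dl (r *\<^sub>R b) f) \<xi> = 2 * ft f \<xi>"
proof -
  let ?h = "r *\<^sub>R b"
  let ?e = "\<lambda>y. exp (- \<i> * complex_of_real (y \<bullet> \<xi>))"
  have he: "?e (y + ?h) = - ?e y" for y
  proof -
    have "?h \<bullet> \<xi> = pi * sgn (\<xi> \<bullet> b)" using s r
      by (auto simp: inner_commute sgn_if abs_if field_simps)
    then have "exp (- \<i> * complex_of_real (?h \<bullet> \<xi>)) = -1" using s
      by (auto simp: sgn_if exp_minus exp_pi_i' mult.commute[of \<i>])
    moreover have "?e (y + ?h) = ?e y * exp (- \<i> * complex_of_real (?h \<bullet> \<xi>))"
      by (simp add: inner_add_left distrib_left exp_add[symmetric])
    ultimately show ?thesis by simp
  qed
  have [measurable]: "?e \<in> borel_measurable borel" by measurable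
  have i1: "integrable lborel (\<lambda>y. f y * ?e y)" by (rule integrable_mult_exp[OF _ i]) measurable
  have i2: "integrable lborel (\<lambda>y. f (y - ?h) * ?e y)"
  proof -
    have "integrable lborel (\<lambda>y. f (y + (- ?h)))" using i by (subst integrable_translate) auto
    then show ?thesis by (intro integrable_mult_exp) auto
  qed
  have "(\<integral>y. f (y - ?h) * ?e y \<partial>lborel) = (\<integral>y. f ((y + ?h) - ?h) * ?e (y + ?h) \<partial>lborel)"
    by (rule integral_translate[symmetric]) measurable
  also have "\<dots> = - ft f \<xi>"
    by (simp only: add_diff_cancel he mult_minus_right Bochner_Integration.integral_minus ft_def)
  finally have tr: "(\<integral>y. f (y - ?h) * ?e y \<partial>lborel) = - ft f \<xi>" .
  have "ft (Dl ?h f) \<xi> = (\<integral>y. f y * ?e y - f (y - ?h) * ?e y \<partial>lborel)"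
    unfolding ft_def Dl_def by (simp add: left_diff_distrib)
  also have "\<dots> = ft f \<xi> - (\<integral>y. f (y - ?h) * ?e y \<partial>lborel)"
    unfolding ft_def by (rule Bochner_Integration.integral_diff[OF i1 i2])
  finally show ?thesis using tr by simp
qed

lemma ft_Dl_pow:
  fixes f :: "'a::euclidean_space \<Rightarrow> complex"
  assumes "f \<in> borel_measurable borel" and "integrable lborel f"
    and s: "\<xi> \<bullet> b \<noteq> 0" and r: "r = pi / \<bar>\<xi> \<bullet> b\<bar>"
  shows "ft ((Dl (r *\<^sub>R b) ^^ K) f) \<xi> = 2 ^ K * ft f \<xi>"
proof (induction K)
  case (Suc K)
  have "ft ((Dl (r *\<^sub>R b) ^^ Suc K) f) \<xi> = ft (Dl (r *\<^sub>R b) ((Dl (r *\<^sub>R b) ^^ K) f)) \<xi>" by simp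
  also have "\<dots> = 2 * ft ((Dl (r *\<^sub>R b) ^^ K) f) \<xi>"
    using Dl_pow_meas_int[OF assms(1,2)] by (intro ft_Dl s r) auto
  finally show ?case using Suc by simp
qed simp

lemma norm_integral_le_nn:
  fixes g :: "'a::euclidean_space \<Rightarrow> complex"
  assumes "integrable lborel g" and "(\<integral>\<^sup>+y. norm (g y) \<partial>lborel) \<le> ennreal B" and "0 \<le> B"
  shows "norm (\<integral>y. g y \<partial>lborel) \<le> B"
proof -
  have "ennreal (\<integral>y. norm (g y) \<partial>lborel) = (\<integral>\<^sup>+y. norm (g y) \<partial>lborel)"
    by (rule nn_integral_eq_integral[symmetric]) (use assms in auto)
  then have "ennreal (\<integral>y. norm (g y) \<partial>lborel) \<le> ennreal B" using assms by simp
  then have "(\<integral>y. norm (g y) \<partial>lborel) \<le> B" using ennreal_le_iff[OF assms(3)] by blast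
  then show ?thesis using integral_norm_bound order_trans by blast
qed

lemma ft_decay:
  fixes F G :: "nat \<Rightarrow> 'a::euclidean_space \<Rightarrow> complex"
  assumes dF: "derseq b F" and dG: "derseq b G"
    and M: "\<And>j y. j \<le> K \<Longrightarrow> norm (F j y) \<le> M"
    and L: "\<And>j. j \<le> K \<Longrightarrow> (\<integral>\<^sup>+y. norm (G j y) \<partial>lborel) \<le> ennreal L"
    and M0: "0 \<le> M" and L0: "0 \<le> L"
    and i: "integrable lborel (\<lambda>y. F 0 y * G 0 y)"
    and s: "\<xi> \<bullet> b \<noteq> 0"
  shows "norm (ft (\<lambda>y. F 0 y * G 0 y) \<xi>) \<le> (pi / \<bar>\<xi> \<bullet> b\<bar>) ^ K * M * L"
proof -
  define r where "r = pi / \<bar>\<xi> \<bullet> b\<bar>"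
  have r0: "0 < r" using s by (simp add: r_def)
  let ?p = "\<lambda>y. F 0 y * G 0 y"
  have mp [measurable]: "?p \<in> borel_measurable borel"
    using dF dG by (intro borel_measurable_continuous_onI continuous_intros derseq_cont)
  have mi: "(Dl (r *\<^sub>R b) ^^ K) ?p \<in> borel_measurable borel \<and> integrable lborel ((Dl (r *\<^sub>R b) ^^ K) ?p)"
    by (rule Dl_pow_meas_int[OF mp i])
  have "2 ^ K * norm (ft ?p \<xi>) = norm (ft ((Dl (r *\<^sub>R b) ^^ K) ?p) \<xi>)"
    using ft_Dl_pow[OF mp i s r_def] by (simp add: norm_mult norm_power)
  also have "\<dots> \<le> (2 * r) ^ K * M * L"
    unfolding ft_def
  proof (rule norm_integral_le_nn)
    show "integrable lborel (\<lambda>y. (Dl (r *\<^sub>R b) ^^ K) ?p y * exp (- \<i> * complex_of_real (y \<bullet> \<xi>)))"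
      using mi by (intro integrable_mult_exp) auto
    have "(\<integral>\<^sup>+y. norm ((Dl (r *\<^sub>R b) ^^ K) ?p y * exp (- \<i> * complex_of_real (y \<bullet> \<xi>))) \<partial>lborel)
        = (\<integral>\<^sup>+y. norm ((Dl (r *\<^sub>R b) ^^ K) ?p y) \<partial>lborel)" by (simp add: norm_mult)
    also have "\<dots> \<le> ennreal ((2 * r) ^ K * M * L)"
      by (rule Dl_prod_bound[OF r0 dF dG M L M0 L0])
    finally show "(\<integral>\<^sup>+y. norm ((Dl (r *\<^sub>R b) ^^ K) ?p y * exp (- \<i> * complex_of_real (y \<bullet> \<xi>))) \<partial>lborel)
        \<le> ennreal ((2 * r) ^ K * M * L)" .
  qed (use r0 M0 L0 in auto)
  finally have "2 ^ K * norm (ft ?p \<xi>) \<le> 2 ^ K * (r ^ K * M * L)" by (simp add: power_mult_distrib mult_ac)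
  then show ?thesis by (simp add: r_def)
qed


(* ---- part 5 ---- *)

lemma poly_bound: fixes P :: "real poly" shows "\<bar>poly P t\<bar> \<le> (\<Sum>i\<le>degree P. \<bar>coeff P i\<bar>) * (1 + \<bar>t\<bar>) ^ degree P"
proof -
  have "\<bar>poly P t\<bar> = \<bar>\<Sum>i\<le>degree P. coeff P i * t ^ i\<bar>" by (simp add: poly_altdef)
  also have "\<dots> \<le> (\<Sum>i\<le>degree P. \<bar>coeff P i\<bar> * (1 + \<bar>t\<bar>) ^ degree P)"
  proof (rule order_trans[OF sum_abs], rule sum_mono)
    fix i assume "i \<in> {..degree P}"
    then have i: "i \<le> degree P" by simp
    have "\<bar>t\<bar> ^ i \<le> (1 + \<bar>t\<bar>) ^ i" by (intro power_mono) auto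
    also have "\<dots> \<le> (1 + \<bar>t\<bar>) ^ degree P" by (intro power_increasing i) auto
    finally have "\<bar>t\<bar> ^ i \<le> (1 + \<bar>t\<bar>) ^ degree P" .
    then show "\<bar>coeff P i * t ^ i\<bar> \<le> \<bar>coeff P i\<bar> * (1 + \<bar>t\<bar>) ^ degree P"
      by (simp add: abs_mult power_abs mult_left_mono)
  qed
  also have "\<dots> = (\<Sum>i\<le>degree P. \<bar>coeff P i\<bar>) * (1 + \<bar>t\<bar>) ^ degree P" by (simp add: sum_distrib_right)
  finally show ?thesis .
qed

lemma finite_bound:
  fixes f :: "nat \<Rightarrow> 'a \<Rightarrow> real" and K :: nat
  assumes "\<And>j. \<exists>C. \<forall>y. f j y \<le> (C::real)"
  shows "\<exists>C. 0 \<le> C \<and> (\<forall>j\<le>K. \<forall>y. f j y \<le> C)"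
proof (induction K)
  case 0
  obtain C where "\<forall>y. f 0 y \<le> C" using assms by blast
  then show ?case by (intro exI[of _ "max 0 C"]) (auto simp: le_max_iff_disj)
next
  case (Suc K)
  obtain C where C: "0 \<le> C" "\<forall>j\<le>K. \<forall>y. f j y \<le> C" using Suc by blast
  obtain C' where C': "\<forall>y. f (Suc K) y \<le> C'" using assms by blast
  show ?case
  proof (intro exI[of _ "max C C'"] conjI allI impI)
    fix j y assume "j \<le> Suc K"
    then show "f j y \<le> max C C'" using C C' by (cases "j = Suc K") (auto simp: le_max_iff_disj)
  qed (use C in \<open>auto simp: le_max_iff_disj\<close>)
qed

locale setting = psdmat A for A :: "real^'n^'n" +
  fixes \<phi> :: "real^'n \<Rightarrow> complex"
  assumes S: "schwartz \<phi>"
begin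

definition u :: "real^'n \<Rightarrow> complex" where "u y = complex_of_real (exp (- q y))"

lemma u_eq: "(\<lambda>y. complex_of_real (exp (- (y \<bullet> (A *v y))))) = u"
  by (rule ext) (simp add: u_def q_def)

lemma norm_u: "norm (u y) \<le> 1"
  using q_nonneg[of y] by (simp add: u_def)

lemma u_cont: "continuous_on S u"
  unfolding u_def by (intro continuous_intros)

lemma phi_cont: "continuous_on S \<phi>"
  using schwartz_cont[OF S, of "[]"] by simp

lemma phi_meas [measurable]: "\<phi> \<in> borel_measurable borel"
  by (intro borel_measurable_continuous_onI phi_cont)

lemma phi_int: "integrable lborel \<phi>"
proof -
  have "integrable lborel (\<lambda>y. norm (\<phi> y))" using schwartz_integrable[OF S, of "[]" 0] by simp
  then show ?thesis by (subst integrable_norm_iff[symmetric]) auto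
qed

lemma phi_bounded: "\<exists>C. \<forall>y. norm (\<phi> y) \<le> C"
  using schwartz_bound[OF S, of "[]" 0] by simp

subsection \<open>Gaussian derivative sequence along b\<close>

context fixes b :: "real^'n"
begin

definition al :: "real^'n \<Rightarrow> real" where "al y = Bf b y"

primrec P :: "nat \<Rightarrow> real poly" where
  "P 0 = 1"
| "P (Suc j) = smult (q b) (pderiv (P j)) - [:0, 2:] * P j"

definition Fg :: "nat \<Rightarrow> real^'n \<Rightarrow> complex" where
  "Fg j y = complex_of_real (poly (P j) (al y) * exp (- q y))"

lemma al_line: "al (y + s *\<^sub>R b) = al y + s * q b"
  by (simp add: al_def Bf_def q_def matrix_vector_right_distrib matrix_vector_mult_scaleR inner_add_right)

lemma q_line: "q (y + s *\<^sub>R b) = q y + 2 * s * al y + s\<^sup>2 * q b"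
  using q_add[of y "s *\<^sub>R b"] by (simp add: q_scale Bf_scale al_def Bf_sym[of y b])

lemma Fg_deriv: "((\<lambda>s. Fg j (y + s *\<^sub>R b)) has_vector_derivative Fg (Suc j) y) (at 0)"
proof -
  have e: "(\<lambda>s. Fg j (y + s *\<^sub>R b)) = (\<lambda>s. complex_of_real (poly (P j) (al y + s * q b) * exp (- (q y + 2 * s * al y + s\<^sup>2 * q b))))"
    by (simp add: Fg_def al_line q_line)
  have d1: "((\<lambda>s. poly (P j) (al y + s * q b)) has_real_derivative poly (pderiv (P j)) (al y + 0 * q b) * q b) (at 0)"
    by (rule DERIV_chain2[OF poly_DERIV]) (auto intro!: derivative_eq_intros)
  have d2: "((\<lambda>s. exp (- (q y + 2 * s * al y + s\<^sup>2 * q b))) has_real_derivative exp (- (q y + 2 * 0 * al y + 0\<^sup>2 * q b)) * (- (2 * al y))) (at 0)"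
    by (auto intro!: derivative_eq_intros)
  have d: "((\<lambda>s. poly (P j) (al y + s * q b) * exp (- (q y + 2 * s * al y + s\<^sup>2 * q b))) has_real_derivative
     poly (P (Suc j)) (al y) * exp (- q y)) (at 0)"
    using DERIV_mult[OF d1 d2] by (simp add: algebra_simps)
  show ?thesis by (subst e, unfold Fg_def) (rule has_vector_derivative_of_real[OF d])
qed

lemma Fg_cont: "continuous_on UNIV (Fg j)"
  unfolding Fg_def al_def Bf_def
  by (intro continuous_intros q_cont linear_continuous_on) auto

lemma Fg_derseq: "derseq b Fg"
  by (rule derseqI0) (rule Fg_deriv, rule Fg_cont)

lemma Fg_bound: "\<exists>C. \<forall>y. norm (Fg j y) \<le> C"
proof -
  let ?c = "(\<Sum>i\<le>degree (P j). \<bar>coeff (P j) i\<bar>)"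
  let ?d = "degree (P j)"
  have c0: "0 \<le> ?c" by (intro sum_nonneg) auto
  have qb: "0 \<le> q b" by (rule q_nonneg)
  show ?thesis
  proof (intro exI allI)
    fix y
    have al2: "(al y)\<^sup>2 \<le> q b * q y" unfolding al_def by (rule CS)
    have "\<bar>al y\<bar> \<le> q b + q y"
    proof -
      have qy: "0 \<le> q y" by (rule q_nonneg)
      have "q b * q y \<le> (q b + q y)\<^sup>2"
        using qb qy by (simp add: power2_eq_square algebra_simps)
      then have "\<bar>al y\<bar>\<^sup>2 \<le> (q b + q y)\<^sup>2" using al2 by simp
      then show ?thesis by (rule power2_le_imp_le) (use qb qy in simp)
    qed
    then have "(1 + \<bar>al y\<bar>) ^ ?d \<le> ((1 + q b) + q y) ^ ?d" by (intro power_mono) auto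
    then have "\<bar>poly (P j) (al y)\<bar> \<le> ?c * ((1 + q b) + q y) ^ ?d"
      using poly_bound[of "P j" "al y"] c0 by (meson mult_left_mono order_trans)
    then have "\<bar>poly (P j) (al y)\<bar> * exp (- q y) \<le> ?c * (((1 + q b) + q y) ^ ?d * exp (- q y))"
      by (simp add: mult_right_mono mult.assoc)
    also have "\<dots> \<le> ?c * (fact ?d * exp (1 + q b))"
      by (intro mult_left_mono poly_exp_bound c0 q_nonneg) (use qb in auto)
    finally have fin: "\<bar>poly (P j) (al y)\<bar> * exp (- q y) \<le> ?c * (fact ?d * exp (1 + q b))" .
    moreover have "norm (Fg j y) = \<bar>poly (P j) (al y)\<bar> * exp (- q y)"
      by (simp add: Fg_def norm_mult)
    ultimately show "norm (Fg j y) \<le> ?c * (fact ?d * exp (1 + q b))" by simp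
  qed
qed

end

subsection \<open>Window derivative sequence\<close>

definition Gw :: "real^'n \<Rightarrow> real^'n \<Rightarrow> nat \<Rightarrow> real^'n \<Rightarrow> complex" where
  "Gw b x j y = cnj (iter_pd (replicate j b) \<phi> (y - x))"

lemma Gw_deriv:
  assumes b: "b \<in> Basis"
  shows "((\<lambda>s. Gw b x j (y + s *\<^sub>R b)) has_vector_derivative Gw b x (Suc j) y) (at 0)"
proof -
  let ?f = "iter_pd (replicate j b) \<phi>"
  let ?D = "frechet_derivative ?f (at (y - x))"
  have "?f differentiable (at (y - x))" using b by (intro schwartz_diff[OF S]) auto
  then have fd: "(?f has_derivative ?D) (at (y - x))" by (simp add: frechet_derivative_works)
  have ld: "((\<lambda>s. (y - x) + s *\<^sub>R b) has_derivative (\<lambda>s. s *\<^sub>R b)) (at 0)"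
    by (auto intro!: derivative_eq_intros)
  have "((\<lambda>s. ?f ((y - x) + s *\<^sub>R b)) has_derivative (\<lambda>s. ?D (s *\<^sub>R b))) (at 0)"
    using has_derivative_compose[OF ld, of ?f ?D] fd by simp
  moreover have "(\<lambda>s. ?D (s *\<^sub>R b)) = (\<lambda>s. s *\<^sub>R ?D b)"
    using has_derivative_bounded_linear[OF fd] by (simp add: bounded_linear.linear linear_cmul)
  ultimately have "((\<lambda>s. ?f ((y - x) + s *\<^sub>R b)) has_vector_derivative ?D b) (at 0)"
    by (simp add: has_vector_derivative_def)
  then have "((\<lambda>s. cnj (?f ((y - x) + s *\<^sub>R b))) has_vector_derivative cnj (?D b)) (at 0)"
    by (rule has_vector_derivative_cnj)
  moreover have e: "\<And>s. y + s *\<^sub>R b - x = (y - x) + s *\<^sub>R b" by (simp add: diff_add_eq)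
  ultimately show ?thesis unfolding Gw_def e by simp
qed

lemma Gw_cont:
  assumes b: "b \<in> Basis" shows "continuous_on UNIV (Gw b x j)"
proof -
  have c: "continuous_on UNIV (iter_pd (replicate j b) \<phi>)" using b by (intro schwartz_cont[OF S]) auto
  have "continuous_on UNIV (\<lambda>y. iter_pd (replicate j b) \<phi> (y - x))"
    by (rule continuous_on_compose2[OF c]) (auto intro: continuous_intros)
  then show ?thesis unfolding Gw_def by (intro continuous_intros)
qed

lemma Gw_derseq: "b \<in> Basis \<Longrightarrow> derseq b (Gw b x)"
  by (rule derseqI0) (erule Gw_deriv, erule Gw_cont)

definition Lw :: "real^'n \<Rightarrow> nat \<Rightarrow> real" where
  "Lw b j = (\<integral>y. norm (iter_pd (replicate j b) \<phi> y) \<partial>lborel)"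

lemma Gw_L1:
  assumes b: "b \<in> Basis"
  shows "(\<integral>\<^sup>+y. norm (Gw b x j y) \<partial>lborel) = ennreal (Lw b j)"
proof -
  have sb: "set (replicate j b) \<subseteq> Basis" using b by auto
  have [measurable]: "iter_pd (replicate j b) \<phi> \<in> borel_measurable borel" by (rule schwartz_meas[OF S sb])
  have "(\<integral>\<^sup>+y. norm (Gw b x j y) \<partial>lborel) = (\<integral>\<^sup>+y. norm (iter_pd (replicate j b) \<phi> (y + (- x))) \<partial>lborel)"
    by (simp add: Gw_def)
  also have "\<dots> = (\<integral>\<^sup>+y. norm (iter_pd (replicate j b) \<phi> y) \<partial>lborel)"
    by (rule nn_integral_translate[where f="\<lambda>y. ennreal (norm (iter_pd (replicate j b) \<phi> y))"]) measurable
  also have "\<dots> = ennreal (Lw b j)" unfolding Lw_def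
    using schwartz_integrable[OF S sb, of 0] by (intro nn_integral_eq_integral) auto
  finally show ?thesis .
qed

lemma Lw_nonneg: "0 \<le> Lw b j" unfolding Lw_def by simp

subsection \<open>Decay in the frequency variable\<close>

lemma stft_ft: "stft \<phi> u (x, \<xi>) = ft (\<lambda>y. Fg b 0 y * Gw b x 0 y) \<xi>"
  by (simp add: stft_def ft_def Fg_def Gw_def u_def)

lemma prod_int: "integrable lborel (\<lambda>y. u y * cnj (\<phi> (y - x)))"
proof -
  have "integrable lborel (\<lambda>y. \<phi> (y + (- x)))" using phi_int by (subst integrable_translate) auto
  then have i: "integrable lborel (\<lambda>y. norm (\<phi> (y - x)))" by simp
  show ?thesis
  proof (rule Bochner_Integration.integrable_bound[OF i])
    have c: "continuous_on UNIV (\<lambda>y. \<phi> (y - x))"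
      by (rule continuous_on_compose2[OF phi_cont]) (auto intro: continuous_intros)
    have "continuous_on UNIV (\<lambda>y. u y * cnj (\<phi> (y - x)))"
      by (intro continuous_on_mult u_cont continuous_on_cnj c)
    then show "(\<lambda>y. u y * cnj (\<phi> (y - x))) \<in> borel_measurable lborel"
      by (simp add: borel_measurable_continuous_onI)
    show "AE y in lborel. norm (u y * cnj (\<phi> (y - x))) \<le> norm (norm (\<phi> (y - x)))"
      using norm_u by (auto simp: norm_mult intro!: mult_left_le_one_le)
  qed
qed

lemma stft_xi_decay:
  assumes b: "b \<in> Basis"
  shows "\<exists>C. 0 \<le> C \<and> (\<forall>x \<xi>. \<xi> \<bullet> b \<noteq> 0 \<longrightarrow> norm (stft \<phi> u (x, \<xi>)) \<le> C * (1 / \<bar>\<xi> \<bullet> b\<bar>) ^ K)"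
proof -
  obtain M where M: "0 \<le> M" "\<And>j y. j \<le> K \<Longrightarrow> norm (Fg b j y) \<le> M"
    using finite_bound[of "\<lambda>j y. norm (Fg b j y)" K] Fg_bound by blast
  define L where "L = (\<Sum>j\<le>K. Lw b j)"
  have L0: "0 \<le> L" unfolding L_def by (intro sum_nonneg Lw_nonneg)
  have L: "(\<integral>\<^sup>+y. norm (Gw b x j y) \<partial>lborel) \<le> ennreal L" if "j \<le> K" for x j
    unfolding Gw_L1[OF b] L_def using that
    by (intro ennreal_leI member_le_sum[where f="Lw b"]) (auto intro: Lw_nonneg)
  show ?thesis
  proof (intro exI[of _ "pi ^ K * M * L"] conjI allI impI)
    show "0 \<le> pi ^ K * M * L" using M L0 by simp
    fix x \<xi> assume s: "\<xi> \<bullet> b \<noteq> 0"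
    have i: "integrable lborel (\<lambda>y. Fg b 0 y * Gw b x 0 y)"
      using prod_int[of x] by (simp add: Fg_def Gw_def u_def)
    have "norm (stft \<phi> u (x, \<xi>)) \<le> (pi / \<bar>\<xi> \<bullet> b\<bar>) ^ K * M * L"
      unfolding stft_ft[of _ _ b]
      by (rule ft_decay[OF Fg_derseq Gw_derseq[OF b] M(2) L M(1) L0 i s])
    also have "\<dots> = pi ^ K * M * L * (1 / \<bar>\<xi> \<bullet> b\<bar>) ^ K"
      by (simp add: power_divide)
    finally show "norm (stft \<phi> u (x, \<xi>)) \<le> pi ^ K * M * L * (1 / \<bar>\<xi> \<bullet> b\<bar>) ^ K" .
  qed
qed

lemma stft_bound: "norm (stft \<phi> u z) \<le> (\<integral>y. norm (\<phi> y) \<partial>lborel)"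
proof -
  obtain x \<xi> where z: "z = (x, \<xi>)" by force
  have "norm (stft \<phi> u z) \<le> (\<integral>y. norm (u y * cnj (\<phi> (y - x)) * exp (- \<i> * complex_of_real (y \<bullet> \<xi>))) \<partial>lborel)"
    unfolding z stft_def by (simp add: integral_norm_bound)
  also have "\<dots> \<le> (\<integral>y. norm (\<phi> (y + (- x))) \<partial>lborel)"
  proof (rule integral_mono)
    show "integrable lborel (\<lambda>y. norm (u y * cnj (\<phi> (y - x)) * exp (- \<i> * complex_of_real (y \<bullet> \<xi>))))"
      using integrable_norm[OF prod_int[of x]] by (simp add: norm_mult)
    show "integrable lborel (\<lambda>y. norm (\<phi> (y + - x)))"
      using phi_int by (subst integrable_translate) (auto simp: integrable_norm)
    show "norm (u y * cnj (\<phi> (y - x)) * exp (- \<i> * complex_of_real (y \<bullet> \<xi>))) \<le> norm (\<phi> (y + - x))" for y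
      using norm_u[of y] by (simp add: norm_mult mult_left_le_one_le)
  qed
  also have "\<dots> = (\<integral>y. norm (\<phi> y) \<partial>lborel)"
    by (rule integral_translate[where f="\<lambda>y. norm (\<phi> y)"]) measurable
  finally show ?thesis .
qed

end


(* ---- part 6 ---- *)

context setting
begin

lemma stft_le: "norm (stft \<phi> u (x, \<xi>)) \<le> (\<integral>y. norm (u y) * norm (\<phi> (y - x)) \<partial>lborel)"
proof -
  have "norm (stft \<phi> u (x, \<xi>)) \<le> (\<integral>y. norm (u y * cnj (\<phi> (y - x)) * exp (- \<i> * complex_of_real (y \<bullet> \<xi>))) \<partial>lborel)"
    unfolding stft_def by (simp add: integral_norm_bound)
  also have "\<dots> = (\<integral>y. norm (u y) * norm (\<phi> (y - x)) \<partial>lborel)" by (simp add: norm_mult)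
  finally show ?thesis .
qed

lemma stft_x_decay:
  assumes c: "0 < c"
  shows "\<exists>C. \<forall>x \<xi>. c * (norm (x, \<xi>))\<^sup>2 \<le> q x \<longrightarrow> (1 + (norm (x, \<xi>))\<^sup>2) ^ K * norm (stft \<phi> u (x, \<xi>)) \<le> C"
proof -
  define B where "B = onorm ((*v) A)"
  have B0: "0 \<le> B" unfolding B_def by (rule onorm_nonneg)
  define \<kappa> where "\<kappa> = 2 / c"
  have k0: "0 < \<kappa>" using c by (simp add: \<kappa>_def)
  define C1 where "C1 = \<kappa> ^ K * (fact K * exp (1 / \<kappa>))"
  define D where "D = (1 + \<kappa> * B) ^ K"
  have C10: "0 \<le> C1" unfolding C1_def using k0 by simp
  have D0: "0 \<le> D" unfolding D_def using k0 B0 by simp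
  define I where "I = (\<integral>w. (1 + (norm w)\<^sup>2) ^ K * norm (iter_pd [] \<phi> w) \<partial>lborel)"
  have Iint: "integrable lborel (\<lambda>w. (1 + (norm w)\<^sup>2) ^ K * norm (\<phi> w))"
    using schwartz_integrable[OF S, of "[]" K] by simp
  have [measurable]: "(\<lambda>w. (1 + (norm w)\<^sup>2) ^ K * norm (\<phi> w)) \<in> borel_measurable borel" by measurable
  show ?thesis
  proof (intro exI[of _ "C1 * D * I"] allI impI)
    fix x \<xi> :: "real^'n" assume hz: "c * (norm (x, \<xi>))\<^sup>2 \<le> q x"
    define Z where "Z = (norm (x, \<xi>))\<^sup>2"
    have Z0: "0 \<le> Z" by (simp add: Z_def)
    have pt: "(1 + Z) ^ K * (norm (u y) * norm (\<phi> (y - x))) \<le> C1 * D * ((1 + (norm (y - x))\<^sup>2) ^ K * norm (\<phi> (y - x)))" for y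
    proof -
      define Q where "Q = q y"
      define W where "W = (norm (y - x))\<^sup>2"
      have Q0: "0 \<le> Q" by (simp add: Q_def q_nonneg)
      have W0: "0 \<le> W" by (simp add: W_def)
      have "q x \<le> 2 * q y + 2 * q (x - y)" using q_add_le[of y "x - y"] by simp
      moreover have "q (x - y) \<le> B * W"
        using q_le[of "x - y"] by (simp add: B_def W_def norm_minus_commute)
      ultimately have "c * Z \<le> 2 * Q + 2 * (B * W)" using hz by (simp add: Z_def Q_def)
      then have ZQ: "Z \<le> \<kappa> * Q + \<kappa> * B * W" using c by (simp add: \<kappa>_def field_simps)
      have nn: "0 \<le> (\<kappa> * Q) * (\<kappa> * B * W)" using k0 Q0 W0 B0 by simp
      have ex: "(1 + \<kappa> * Q) * (1 + \<kappa> * B * W) = 1 + \<kappa> * Q + \<kappa> * B * W + (\<kappa> * Q) * (\<kappa> * B * W)"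
        by (simp add: algebra_simps)
      have "1 + Z \<le> (1 + \<kappa> * Q) * (1 + \<kappa> * B * W)" unfolding ex using ZQ nn by linarith
      then have "(1 + Z) ^ K \<le> ((1 + \<kappa> * Q) * (1 + \<kappa> * B * W)) ^ K"
        by (rule power_mono) (use Z0 in simp)
      then have p1: "(1 + Z) ^ K \<le> (1 + \<kappa> * Q) ^ K * (1 + \<kappa> * B * W) ^ K"
        by (simp only: power_mult_distrib)
      have nn2: "0 \<le> \<kappa> * B * W" using k0 B0 W0 by simp
      have "1 + \<kappa> * B * W \<le> (1 + \<kappa> * B) * (1 + W)" using k0 B0 W0 by (simp add: algebra_simps)
      then have "(1 + \<kappa> * B * W) ^ K \<le> ((1 + \<kappa> * B) * (1 + W)) ^ K"
        by (rule power_mono) (use nn2 in simp)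
      then have p2: "(1 + \<kappa> * B * W) ^ K \<le> D * (1 + W) ^ K"
        unfolding D_def by (simp only: power_mult_distrib)
      have e1: "(1 + \<kappa> * Q) ^ K * exp (- Q) \<le> C1"
      proof -
        have "(1 + \<kappa> * Q) = \<kappa> * (1 / \<kappa> + Q)" using k0 by (simp add: field_simps)
        then have "(1 + \<kappa> * Q) ^ K * exp (- Q) = \<kappa> ^ K * ((1 / \<kappa> + Q) ^ K * exp (- Q))"
          by (simp add: power_mult_distrib)
        also have "\<dots> \<le> \<kappa> ^ K * (fact K * exp (1 / \<kappa>))"
          by (intro mult_left_mono poly_exp_bound Q0) (use k0 in auto)
        finally show ?thesis by (simp add: C1_def)
      qed
      have nu: "norm (u y) = exp (- Q)" by (simp add: u_def Q_def)
      have "(1 + Z) ^ K * (norm (u y) * norm (\<phi> (y - x)))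
          \<le> ((1 + \<kappa> * Q) ^ K * (1 + \<kappa> * B * W) ^ K) * (exp (- Q) * norm (\<phi> (y - x)))"
        unfolding nu by (rule mult_right_mono[OF p1]) simp
      also have "\<dots> = ((1 + \<kappa> * Q) ^ K * exp (- Q)) * ((1 + \<kappa> * B * W) ^ K * norm (\<phi> (y - x)))"
        by (simp add: mult_ac)
      also have "\<dots> \<le> C1 * (D * (1 + W) ^ K * norm (\<phi> (y - x)))"
        using e1 p2 Q0 C10 D0 by (intro mult_mono) (auto intro!: mult_right_mono mult_nonneg_nonneg zero_le_power simp: W0 k0 B0 less_imp_le)
      finally show ?thesis by (simp add: W_def mult_ac)
    qed
    have i1: "integrable lborel (\<lambda>y. norm (u y) * norm (\<phi> (y - x)))"
      using integrable_norm[OF prod_int[of x]] by (simp add: norm_mult)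
    have i2: "integrable lborel (\<lambda>y. (1 + (norm (y + - x))\<^sup>2) ^ K * norm (\<phi> (y + - x)))"
      using Iint by (subst integrable_translate) auto
    have "(1 + Z) ^ K * norm (stft \<phi> u (x, \<xi>)) \<le> (1 + Z) ^ K * (\<integral>y. norm (u y) * norm (\<phi> (y - x)) \<partial>lborel)"
      using stft_le Z0 by (intro mult_left_mono) auto
    also have "\<dots> = (\<integral>y. (1 + Z) ^ K * (norm (u y) * norm (\<phi> (y - x))) \<partial>lborel)" by simp
    also have "\<dots> \<le> (\<integral>y. C1 * D * ((1 + (norm (y + - x))\<^sup>2) ^ K * norm (\<phi> (y + - x))) \<partial>lborel)"
      using pt i1 i2 by (intro integral_mono) auto
    also have "\<dots> = C1 * D * (\<integral>y. (1 + (norm (y + - x))\<^sup>2) ^ K * norm (\<phi> (y + - x)) \<partial>lborel)" by simp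
    also have "(\<integral>y. (1 + (norm (y + - x))\<^sup>2) ^ K * norm (\<phi> (y + - x)) \<partial>lborel) = I"
      unfolding I_def using integral_translate[where f="\<lambda>w. (1 + (norm w)\<^sup>2) ^ K * norm (\<phi> w)" and c="- x"] by simp
    finally show "(1 + (norm (x, \<xi>))\<^sup>2) ^ K * norm (stft \<phi> u (x, \<xi>)) \<le> C1 * D * I" by (simp add: Z_def)
  qed
qed

end


(* ---- part 7 ---- *)

lemma jbr_ge1: "1 \<le> jbr z" unfolding jbr_def by simp

lemma jbr_powr_le:
  assumes "0 \<le> N" "N \<le> real K"
  shows "jbr z powr N \<le> (1 + (norm z)\<^sup>2) ^ K"
proof -
  have j1: "1 \<le> jbr z" by (rule jbr_ge1)
  have "jbr z powr N \<le> jbr z powr real K" by (rule powr_mono[OF assms(2) j1])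
  also have "\<dots> = jbr z ^ K" using j1 by (intro powr_realpow) simp
  also have "\<dots> \<le> ((jbr z)\<^sup>2) ^ K"
    using j1 by (intro power_mono) (auto simp: power2_eq_square intro: order_trans[OF _ mult_right_mono[of 1]])
  also have "(jbr z)\<^sup>2 = 1 + (norm z)\<^sup>2" unfolding jbr_def by simp
  finally show ?thesis .
qed

lemma notWF_crit:
  assumes "z0 \<noteq> 0" "open \<Gamma>" "conic \<Gamma>" "0 \<notin> \<Gamma>" "z0 \<in> \<Gamma>"
    and bnd: "\<And>K::nat. \<exists>C. \<forall>z\<in>\<Gamma>. (1 + (norm z)\<^sup>2) ^ K * norm (stft \<phi> u z) \<le> C"
  shows "z0 \<notin> gabor_WF \<phi> u"
proof -
  have "\<forall>N::real. N \<ge> 0 \<longrightarrow> (\<exists>C. \<forall>z\<in>\<Gamma>. jbr z powr N * norm (stft \<phi> u z) \<le> C)"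
  proof (intro allI impI)
    fix N :: real assume N: "0 \<le> N"
    obtain C where C: "\<forall>z\<in>\<Gamma>. (1 + (norm z)\<^sup>2) ^ nat \<lceil>N\<rceil> * norm (stft \<phi> u z) \<le> C" using bnd by blast
    show "\<exists>C. \<forall>z\<in>\<Gamma>. jbr z powr N * norm (stft \<phi> u z) \<le> C"
    proof (intro exI ballI)
      fix z assume z: "z \<in> \<Gamma>"
      have "jbr z powr N \<le> (1 + (norm z)\<^sup>2) ^ nat \<lceil>N\<rceil>"
        by (rule jbr_powr_le[OF N]) (use N in linarith)
      then have "jbr z powr N * norm (stft \<phi> u z) \<le> (1 + (norm z)\<^sup>2) ^ nat \<lceil>N\<rceil> * norm (stft \<phi> u z)"
        by (rule mult_right_mono) simp
      also have "\<dots> \<le> C" using C z by blast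
      finally show "jbr z powr N * norm (stft \<phi> u z) \<le> C" .
    qed
  qed
  then show ?thesis using assms unfolding gabor_WF_def by blast
qed

context setting
begin

lemma case_xi:
  assumes xi0: "\<xi>0 \<noteq> 0"
  shows "(x0, \<xi>0) \<notin> gabor_WF \<phi> u"
proof -
  obtain b :: "real^'n" where b: "b \<in> Basis" "\<xi>0 \<bullet> b \<noteq> 0"
    using xi0 euclidean_all_zero_iff[of \<xi>0] by blast
  define n0 where "n0 = norm (x0, \<xi>0)"
  have n0: "0 < n0" using xi0 by (simp add: n0_def zero_prod_def)
  define c where "c = \<bar>\<xi>0 \<bullet> b\<bar> / (2 * n0)"
  have c0: "0 < c" using b n0 by (simp add: c_def)
  define \<Gamma> where "\<Gamma> = {z::(real^'n) \<times> (real^'n). c * norm z < \<bar>snd z \<bullet> b\<bar>}"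
  show ?thesis
  proof (rule notWF_crit)
    show "(x0, \<xi>0) \<noteq> 0" using xi0 by (simp add: zero_prod_def)
    show "open \<Gamma>" unfolding \<Gamma>_def by (intro open_Collect_less continuous_intros)
    show "conic \<Gamma>" unfolding conic_def \<Gamma>_def
    proof (intro ballI allI impI)
      fix z :: "(real^'n) \<times> (real^'n)" and t :: real
      assume "z \<in> {z. c * norm z < \<bar>snd z \<bullet> b\<bar>}" "0 < t"
      then show "t *\<^sub>R z \<in> {z. c * norm z < \<bar>snd z \<bullet> b\<bar>}" by (simp add: abs_mult)
    qed
    show "0 \<notin> \<Gamma>" unfolding \<Gamma>_def by simp
    show "(x0, \<xi>0) \<in> \<Gamma>" unfolding \<Gamma>_def using b n0 by (simp add: c_def n0_def)
    fix K :: nat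
    obtain C2 where C2: "0 \<le> C2" "\<And>x \<xi>. \<xi> \<bullet> b \<noteq> 0 \<Longrightarrow> norm (stft \<phi> u (x, \<xi>)) \<le> C2 * (1 / \<bar>\<xi> \<bullet> b\<bar>) ^ (2 * K)"
      using stft_xi_decay[OF b(1), of "2 * K"] by blast
    define C0 where "C0 = (\<integral>y. norm (\<phi> y) \<partial>lborel)"
    have C00: "0 \<le> C0" unfolding C0_def by simp
    show "\<exists>C. \<forall>z\<in>\<Gamma>. (1 + (norm z)\<^sup>2) ^ K * norm (stft \<phi> u z) \<le> C"
    proof (intro exI[of _ "2 ^ K * C0 + 2 ^ K * (C2 * (1 / c) ^ (2 * K))"] ballI)
      fix z assume z: "z \<in> \<Gamma>"
      obtain x \<xi> where zz: "z = (x, \<xi>)" by force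
      define n where "n = norm z"
      have hz: "c * n < \<bar>\<xi> \<bullet> b\<bar>" using z by (simp add: \<Gamma>_def zz n_def)
      have nb: "norm (stft \<phi> u z) \<le> C0" unfolding C0_def by (rule stft_bound)
      have p2: "0 \<le> 2 ^ K * (C2 * (1 / c) ^ (2 * K))" using C2 c0 by simp
      show "(1 + (norm z)\<^sup>2) ^ K * norm (stft \<phi> u z) \<le> 2 ^ K * C0 + 2 ^ K * (C2 * (1 / c) ^ (2 * K))"
      proof (cases "n \<le> 1")
        case True
        have "(1 + (norm z)\<^sup>2) ^ K \<le> 2 ^ K"
          using True by (intro power_mono) (auto simp: n_def abs_square_le_1)
        then have "(1 + (norm z)\<^sup>2) ^ K * norm (stft \<phi> u z) \<le> 2 ^ K * C0"
          using nb C00 by (intro mult_mono) auto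
        then show ?thesis using p2 by linarith
      next
        case False
        then have n1: "1 < n" by simp
        have cn: "0 < c * n" using c0 n1 by simp
        have s: "\<xi> \<bullet> b \<noteq> 0" using hz cn by auto
        have "(1 + (norm z)\<^sup>2) ^ K \<le> (2 * n\<^sup>2) ^ K"
          using n1 by (intro power_mono) (auto simp: n_def power2_eq_square intro: order_trans[OF _ mult_right_mono[of 1]])
        also have "\<dots> = 2 ^ K * n ^ (2 * K)" by (simp add: power_mult_distrib power_mult)
        finally have a: "(1 + (norm z)\<^sup>2) ^ K \<le> 2 ^ K * n ^ (2 * K)" .
        have "1 / \<bar>\<xi> \<bullet> b\<bar> \<le> 1 / (c * n)" using hz cn by (intro divide_left_mono) auto
        then have "(1 / \<bar>\<xi> \<bullet> b\<bar>) ^ (2 * K) \<le> (1 / (c * n)) ^ (2 * K)" by (intro power_mono) auto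
        then have "norm (stft \<phi> u z) \<le> C2 * (1 / (c * n)) ^ (2 * K)"
          using C2(2)[OF s, of x] C2(1) zz by (meson mult_left_mono order_trans)
        then have "(1 + (norm z)\<^sup>2) ^ K * norm (stft \<phi> u z) \<le> 2 ^ K * n ^ (2 * K) * (C2 * (1 / (c * n)) ^ (2 * K))"
          using a by (intro mult_mono) auto
        also have "\<dots> = 2 ^ K * C2 * (n ^ (2 * K) * (1 / (c * n)) ^ (2 * K))" by (simp add: mult_ac)
        also have "n * (1 / (c * n)) = 1 / c" using n1 by simp
        then have e: "n ^ (2 * K) * (1 / (c * n)) ^ (2 * K) = (1 / c) ^ (2 * K)" by (metis power_mult_distrib)
        finally have "(1 + (norm z)\<^sup>2) ^ K * norm (stft \<phi> u z) \<le> 2 ^ K * (C2 * (1 / c) ^ (2 * K))"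
          by (simp only: e mult.assoc)
        moreover have "0 \<le> 2 ^ K * C0" using C00 by simp
        ultimately show ?thesis by linarith
      qed
    qed
  qed
qed

lemma case_x:
  assumes Ax: "A *v x0 \<noteq> 0"
  shows "(x0, 0) \<notin> gabor_WF \<phi> u"
proof -
  have qx: "0 < q x0" by (rule q_pos[OF Ax])
  have x0: "x0 \<noteq> 0" using Ax by auto
  define c where "c = q x0 / (2 * (norm x0)\<^sup>2)"
  have c0: "0 < c" using qx x0 by (simp add: c_def)
  define \<Gamma> where "\<Gamma> = {z::(real^'n) \<times> (real^'n). c * (norm z)\<^sup>2 < q (fst z)}"
  show ?thesis
  proof (rule notWF_crit)
    show "(x0, 0) \<noteq> 0" using x0 by (simp add: zero_prod_def)
    show "open \<Gamma>" unfolding \<Gamma>_def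
      by (intro open_Collect_less continuous_intros continuous_on_compose2[OF q_cont]) auto
    show "conic \<Gamma>" unfolding conic_def \<Gamma>_def
    proof (intro ballI allI impI)
      fix z :: "(real^'n) \<times> (real^'n)" and t :: real
      assume "z \<in> {z. c * (norm z)\<^sup>2 < q (fst z)}" "0 < t"
      then show "t *\<^sub>R z \<in> {z. c * (norm z)\<^sup>2 < q (fst z)}"
        by (simp add: q_scale power_mult_distrib)
    qed
    show "0 \<notin> \<Gamma>" unfolding \<Gamma>_def by (simp add: q_def)
    show "(x0, 0) \<in> \<Gamma>" unfolding \<Gamma>_def using qx x0 by (simp add: c_def)
    fix K :: nat
    obtain C where C: "\<And>x \<xi>. c * (norm (x, \<xi>))\<^sup>2 \<le> q x \<Longrightarrow> (1 + (norm (x, \<xi>))\<^sup>2) ^ K * norm (stft \<phi> u (x, \<xi>)) \<le> C"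
      using stft_x_decay[OF c0, of K] by blast
    show "\<exists>C. \<forall>z\<in>\<Gamma>. (1 + (norm z)\<^sup>2) ^ K * norm (stft \<phi> u z) \<le> C"
    proof (intro exI[of _ C] ballI)
      fix z assume "z \<in> \<Gamma>"
      then show "(1 + (norm z)\<^sup>2) ^ K * norm (stft \<phi> u z) \<le> C"
        using C[of "fst z" "snd z"] by (simp add: \<Gamma>_def)
    qed
  qed
qed

lemma WF_subset: "gabor_WF \<phi> u \<subseteq> {(x, 0) | x. A *v x = 0 \<and> x \<noteq> 0}"
proof
  fix z assume z: "z \<in> gabor_WF \<phi> u"
  obtain x \<xi> where zz: "z = (x, \<xi>)" by force
  have "\<xi> = 0" using case_xi z zz by blast
  moreover have "A *v x = 0" using case_x z zz \<open>\<xi> = 0\<close> by blast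
  moreover have "z \<noteq> 0" using z by (simp add: gabor_WF_def)
  ultimately show "z \<in> {(x, 0) | x. A *v x = 0 \<and> x \<noteq> 0}" using zz by (auto simp: zero_prod_def)
qed

end


(* ---- part 8 ---- *)

lemma lborel_integral_prod:
  fixes f :: "'a::euclidean_space \<Rightarrow> real \<Rightarrow> 'c::{real_normed_field,banach,second_countable_topology}"
  assumes int: "\<And>b. b \<in> Basis \<Longrightarrow> integrable lborel (f b)"
  shows "integrable lborel (\<lambda>v::'a. \<Prod>b\<in>Basis. f b (v \<bullet> b))"
    and "(\<integral>v. (\<Prod>b\<in>Basis. f b (v \<bullet> b)) \<partial>lborel) = (\<Prod>b\<in>Basis. \<integral>t. f b t \<partial>lborel)"
proof -
  interpret P: product_sigma_finite "\<lambda>_::'a. lborel :: real measure"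
    by (simp add: product_sigma_finite_def sigma_finite_lborel)
  define T where "T = (\<lambda>g::'a\<Rightarrow>real. \<Sum>b\<in>Basis. g b *\<^sub>R b)"
  have Tb: "T g \<bullet> b = g b" if "b \<in> Basis" for g b
    using that by (simp add: T_def inner_sum_left inner_Basis if_distrib cong: if_cong)
  have mf [measurable]: "f b \<in> borel_measurable borel" if "b \<in> Basis" for b
    using int[OF that] by auto
  have mF: "(\<lambda>v::'a. \<Prod>b\<in>Basis. f b (v \<bullet> b)) \<in> borel_measurable borel"
    by (intro borel_measurable_prod) measurable
  have eqF: "(\<lambda>g. \<Prod>b\<in>Basis. f b (T g \<bullet> b)) = (\<lambda>g. \<Prod>b\<in>Basis. f b (g b))"
    by (intro ext prod.cong) (auto simp: Tb)
  have ip: "integrable (\<Pi>\<^sub>M b\<in>(Basis::'a set). (lborel::real measure)) (\<lambda>g. \<Prod>b\<in>Basis. f b (g b))"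
    by (rule P.product_integrable_prod) (auto intro: int)
  have mT: "T \<in> (\<Pi>\<^sub>M b\<in>(Basis::'a set). (lborel::real measure)) \<rightarrow>\<^sub>M borel" unfolding T_def by measurable
  have "integrable (distr (\<Pi>\<^sub>M b\<in>(Basis::'a set). (lborel::real measure)) borel T) (\<lambda>v::'a. \<Prod>b\<in>Basis. f b (v \<bullet> b))"
    by (subst integrable_distr_eq[OF mT mF]) (simp add: eqF ip)
  then show "integrable lborel (\<lambda>v::'a. \<Prod>b\<in>Basis. f b (v \<bullet> b))"
    by (simp add: lborel_eq[symmetric] T_def)
  have "(\<integral>v. (\<Prod>b\<in>Basis. f b (v \<bullet> b)) \<partial>lborel)
      = (\<integral>v. (\<Prod>b\<in>Basis. f b (v \<bullet> b)) \<partial>distr (\<Pi>\<^sub>M b\<in>(Basis::'a set). (lborel::real measure)) borel T)"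
    by (simp add: lborel_eq[symmetric] T_def)
  also have "\<dots> = (\<integral>g. (\<Prod>b\<in>Basis. f b (T g \<bullet> b)) \<partial>(\<Pi>\<^sub>M b\<in>(Basis::'a set). (lborel::real measure)))"
    by (rule integral_distr[OF mT mF])
  also have "\<dots> = (\<Prod>b\<in>Basis. \<integral>t. f b t \<partial>lborel)"
    unfolding eqF by (rule P.product_integral_prod) (auto intro: int)
  finally show "(\<integral>v. (\<Prod>b\<in>Basis. f b (v \<bullet> b)) \<partial>lborel) = (\<Prod>b\<in>Basis. \<integral>t. f b t \<partial>lborel)" .
qed

definition Gs :: "'a::euclidean_space \<Rightarrow> real" where
  "Gs v = (\<Prod>b\<in>Basis. std_normal_density (v \<bullet> b))"

lemma Gs_nonneg: "0 \<le> Gs v" unfolding Gs_def by (intro prod_nonneg) auto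

lemma Gs_cont: "continuous_on S Gs"
  unfolding Gs_def normal_density_def by (intro continuous_intros) auto

lemma Gs_meas [measurable]: "Gs \<in> borel_measurable borel"
  by (intro borel_measurable_continuous_onI Gs_cont)

lemma Gs_int: "integrable lborel (Gs :: 'a::euclidean_space \<Rightarrow> real)"
  unfolding Gs_def[abs_def] by (rule lborel_integral_prod(1)) auto

lemma Gs_integral: "(\<integral>v. Gs (v::'a::euclidean_space) \<partial>lborel) = 1"
  unfolding Gs_def by (subst lborel_integral_prod(2)) auto

lemma char_1d: "(\<integral>t. complex_of_real (std_normal_density t) * exp (\<i> * complex_of_real (s * t)) \<partial>lborel)
    = complex_of_real (exp (- s\<^sup>2 / 2))"
proof -
  have "char std_normal_distribution s = complex_of_real (exp (- s\<^sup>2 / 2))"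
    by (simp add: char_std_normal_distribution)
  moreover have "char std_normal_distribution s = (\<integral>t. std_normal_density t *\<^sub>R exp (\<i> * complex_of_real (s * t)) \<partial>lborel)"
    unfolding char_def by (rule integral_density) auto
  ultimately show ?thesis by (simp add: scaleR_conv_of_real)
qed

lemma Gs_ft:
  "(\<integral>\<xi>. complex_of_real (Gs \<xi>) * exp (\<i> * complex_of_real (w \<bullet> \<xi>)) \<partial>lborel)
     = complex_of_real (sqrt (2 * pi) ^ DIM('a) * Gs (w::'a::euclidean_space))"
proof -
  let ?f = "\<lambda>b t. complex_of_real (std_normal_density t) * exp (\<i> * complex_of_real ((w \<bullet> b) * t))"
  have eq: "complex_of_real (Gs \<xi>) * exp (\<i> * complex_of_real (w \<bullet> \<xi>)) = (\<Prod>b\<in>Basis. ?f b (\<xi> \<bullet> b))" for \<xi>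
  proof -
    have "w \<bullet> \<xi> = (\<Sum>b\<in>Basis. (w \<bullet> b) * (\<xi> \<bullet> b))" by (rule euclidean_inner)
    then have "exp (\<i> * complex_of_real (w \<bullet> \<xi>)) = (\<Prod>b\<in>Basis. exp (\<i> * complex_of_real ((w \<bullet> b) * (\<xi> \<bullet> b))))"
      by (simp add: sum_distrib_left exp_sum)
    then show ?thesis by (simp add: Gs_def prod.distrib)
  qed
  have int: "integrable lborel (?f b)" for b
  proof (rule Bochner_Integration.integrable_bound[OF integrable_normal_density[where \<mu>=0 and \<sigma>=1]])
    show "?f b \<in> borel_measurable lborel" by measurable
  qed (auto simp: norm_mult)
  have "(\<integral>\<xi>. complex_of_real (Gs \<xi>) * exp (\<i> * complex_of_real (w \<bullet> \<xi>)) \<partial>lborel)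
      = (\<integral>\<xi>. (\<Prod>b\<in>Basis. ?f b (\<xi> \<bullet> b)) \<partial>lborel)" by (simp only: eq)
  also have "\<dots> = (\<Prod>b\<in>(Basis::'a set). \<integral>t. ?f b t \<partial>lborel)" by (rule lborel_integral_prod(2)) (rule int)
  also have "\<dots> = (\<Prod>b\<in>(Basis::'a set). complex_of_real (exp (- (w \<bullet> b)\<^sup>2 / 2)))"
    by (intro prod.cong refl) (rule char_1d)
  also have "\<dots> = (\<Prod>b\<in>(Basis::'a set). complex_of_real (sqrt (2 * pi) * std_normal_density (w \<bullet> b)))"
    by (intro prod.cong refl) (simp add: std_normal_density_def)
  also have "\<dots> = complex_of_real (sqrt (2 * pi) ^ DIM('a) * Gs w)"
    by (simp add: Gs_def prod.distrib)
  finally show ?thesis .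
qed

lemma meas_pair_lborel:
  assumes "f \<in> borel_measurable (borel :: ('a::euclidean_space \<times> 'b::euclidean_space) measure)"
  shows "f \<in> borel_measurable ((lborel::'a measure) \<Otimes>\<^sub>M (lborel::'b measure))"
proof -
  have "sets ((lborel::'a measure) \<Otimes>\<^sub>M (lborel::'b measure)) = sets ((borel::'a measure) \<Otimes>\<^sub>M (borel::'b measure))"
    by (rule sets_pair_measure_cong) auto
  also have "\<dots> = sets (borel :: ('a \<times> 'b) measure)" by (simp only: borel_prod)
  finally have fin: "sets ((lborel::'a measure) \<Otimes>\<^sub>M (lborel::'b measure)) = sets (borel :: ('a \<times> 'b) measure)" .
  show ?thesis using assms measurable_cong_sets[OF fin refl] by blast
qed

lemma pair_integrable:
  fixes f :: "'a::euclidean_space \<Rightarrow> real" and g :: "'b::euclidean_space \<Rightarrow> real"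
  assumes f: "integrable lborel f" and g: "integrable lborel g"
  shows "integrable (lborel \<Otimes>\<^sub>M lborel) (\<lambda>(x,y). f x * g y)"
proof -
  have [measurable]: "f \<in> borel_measurable borel" "g \<in> borel_measurable borel" using f g by auto
  have "(\<integral>\<^sup>+z. ennreal (norm ((\<lambda>(x,y). f x * g y) z)) \<partial>(lborel \<Otimes>\<^sub>M lborel))
      = (\<integral>\<^sup>+x. \<integral>\<^sup>+y. ennreal (norm (f x)) * ennreal (norm (g y)) \<partial>(lborel::'b measure) \<partial>(lborel::'a measure))"
    by (subst sigma_finite_measure.nn_integral_fst[OF sigma_finite_lborel, symmetric]) (auto simp: abs_mult ennreal_mult)
  also have "\<dots> = (\<integral>\<^sup>+x. ennreal (norm (f x)) * (\<integral>\<^sup>+y. ennreal (norm (g y)) \<partial>lborel) \<partial>lborel)"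
    by (intro nn_integral_cong nn_integral_cmult) auto
  also have "\<dots> = (\<integral>\<^sup>+x. ennreal (norm (f x)) \<partial>lborel) * (\<integral>\<^sup>+y. ennreal (norm (g y)) \<partial>lborel)"
    by (rule nn_integral_multc) auto
  also have "\<dots> < \<infinity>" using f g by (simp add: integrable_iff_bounded ennreal_mult_less_top)
  finally show ?thesis unfolding integrable_iff_bounded by auto
qed

lemma ft_zero_imp_zero:
  fixes h :: "'a::euclidean_space \<Rightarrow> complex"
  assumes cont: "continuous_on UNIV h" and bnd: "\<And>y. norm (h y) \<le> Bh"
    and int: "integrable lborel h" and zero: "\<And>\<xi>. ft h \<xi> = 0"
  shows "h y0 = 0"
proof -
  have [measurable]: "h \<in> borel_measurable borel" by (rule borel_measurable_continuous_onI[OF cont])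
  define c where "c = sqrt (2 * pi) ^ DIM('a)"
  have c0: "c \<noteq> 0" by (simp add: c_def)
  have conv0: "(\<integral>y. h y * complex_of_real (Gs (t *\<^sub>R (y0 - y))) \<partial>lborel) = 0" if t: "0 < t" for t
  proof -
    define F where "F = (\<lambda>\<xi> y. complex_of_real (Gs \<xi>) * exp (\<i> * complex_of_real (t * (y0 \<bullet> \<xi>)))
        * (h y * exp (- \<i> * complex_of_real (y \<bullet> (t *\<^sub>R \<xi>)))))"
    have intF: "integrable ((lborel::'a measure) \<Otimes>\<^sub>M (lborel::'a measure)) (\<lambda>(\<xi>,y). F \<xi> y)"
    proof (rule Bochner_Integration.integrable_bound[OF pair_integrable[OF Gs_int integrable_norm[OF int]]])
      have "continuous_on UNIV (\<lambda>p::'a\<times>'a. F (fst p) (snd p))"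
      proof -
        have c1: "continuous_on UNIV (\<lambda>p::'a\<times>'a. Gs (fst p))"
          by (rule continuous_on_compose2[OF Gs_cont]) (auto intro: continuous_intros)
        have c2: "continuous_on UNIV (\<lambda>p::'a\<times>'a. h (snd p))"
          by (rule continuous_on_compose2[OF cont]) (auto intro: continuous_intros)
        show ?thesis unfolding F_def
          by (intro continuous_on_mult continuous_on_of_real c1 c2 continuous_on_exp continuous_on_const
              continuous_on_inner continuous_on_fst continuous_on_snd continuous_on_id continuous_on_scaleR)
      qed
      then have "(\<lambda>p::'a\<times>'a. F (fst p) (snd p)) \<in> borel_measurable borel" by (rule borel_measurable_continuous_onI)
      then show "(\<lambda>(\<xi>, y). F \<xi> y) \<in> borel_measurable (lborel \<Otimes>\<^sub>M lborel)"
        by (simp add: case_prod_beta' meas_pair_lborel)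
      show "AE x in lborel \<Otimes>\<^sub>M lborel. norm ((\<lambda>(\<xi>, y). F \<xi> y) x) \<le> norm ((\<lambda>(x, y). Gs x * norm (h y)) x)"
        by (intro AE_I2) (auto simp: F_def norm_mult Gs_nonneg)
    qed
    have A: "(\<integral>\<xi>. (\<integral>y. F \<xi> y \<partial>lborel) \<partial>lborel) = 0"
    proof -
      have "(\<integral>y. F \<xi> y \<partial>lborel) = complex_of_real (Gs \<xi>) * exp (\<i> * complex_of_real (t * (y0 \<bullet> \<xi>))) * ft h (t *\<^sub>R \<xi>)" for \<xi>
        unfolding F_def ft_def by (rule integral_mult_right_zero)
      then show ?thesis by (simp add: zero)
    qed
    have B: "(\<integral>y. (\<integral>\<xi>. F \<xi> y \<partial>lborel) \<partial>lborel) = (\<integral>y. h y * complex_of_real (c * Gs (t *\<^sub>R (y0 - y))) \<partial>lborel)"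
    proof (intro Bochner_Integration.integral_cong refl)
      fix y
      have "F \<xi> y = h y * (complex_of_real (Gs \<xi>) * exp (\<i> * complex_of_real ((t *\<^sub>R (y0 - y)) \<bullet> \<xi>)))" for \<xi>
      proof -
        have "exp (\<i> * complex_of_real (t * (y0 \<bullet> \<xi>))) * exp (- \<i> * complex_of_real (y \<bullet> (t *\<^sub>R \<xi>)))
            = exp (\<i> * complex_of_real ((t *\<^sub>R (y0 - y)) \<bullet> \<xi>))"
          by (simp add: exp_add[symmetric] inner_diff_left algebra_simps)
        then show ?thesis unfolding F_def by (simp add: mult_ac)
      qed
      then have "(\<integral>\<xi>. F \<xi> y \<partial>lborel) = h y * (\<integral>\<xi>. complex_of_real (Gs \<xi>) * exp (\<i> * complex_of_real ((t *\<^sub>R (y0 - y)) \<bullet> \<xi>)) \<partial>lborel)"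
        by (simp add: integral_mult_right_zero)
      also have "\<dots> = h y * complex_of_real (c * Gs (t *\<^sub>R (y0 - y)))" by (simp only: Gs_ft c_def)
      finally show "(\<integral>\<xi>. F \<xi> y \<partial>lborel) = h y * complex_of_real (c * Gs (t *\<^sub>R (y0 - y)))" .
    qed
    have PS: "pair_sigma_finite (lborel::'a measure) (lborel::'a measure)"
      by (intro pair_sigma_finite.intro sigma_finite_lborel)
    have "(\<integral>y. (\<integral>\<xi>. F \<xi> y \<partial>lborel) \<partial>lborel) = (\<integral>\<xi>. (\<integral>y. F \<xi> y \<partial>lborel) \<partial>lborel)"
      by (rule pair_sigma_finite.Fubini_integral[OF PS intF])
    then have "(\<integral>y. h y * complex_of_real (c * Gs (t *\<^sub>R (y0 - y))) \<partial>lborel) = 0" using A B by simp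
    moreover have "(\<lambda>y. h y * complex_of_real (c * Gs (t *\<^sub>R (y0 - y))))
        = (\<lambda>y. complex_of_real c * (h y * complex_of_real (Gs (t *\<^sub>R (y0 - y)))))"
      by (rule ext) (simp add: mult_ac)
    ultimately have "complex_of_real c * (\<integral>y. h y * complex_of_real (Gs (t *\<^sub>R (y0 - y))) \<partial>lborel) = 0"
      by (simp only: integral_mult_right_zero)
    then show ?thesis using c0 by simp
  qed
  have J0: "(\<integral>v. h (y0 - (1 / t) *\<^sub>R v) * complex_of_real (Gs v) \<partial>lborel) = 0" if t: "0 < t" for t
  proof -
    define cc where "cc = - (1 / t)"
    have cc0: "cc \<noteq> 0" using t by (simp add: cc_def)
    define T where "T = (\<lambda>x::'a. y0 + cc *\<^sub>R x)"
    define f where "f = (\<lambda>y. h y * complex_of_real (Gs (t *\<^sub>R (y0 - y))))"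
    have cf: "continuous_on UNIV f" unfolding f_def
      by (intro continuous_intros continuous_on_compose2[OF Gs_cont] cont) auto
    have [measurable]: "f \<in> borel_measurable borel" by (rule borel_measurable_continuous_onI[OF cf])
    have [measurable]: "T \<in> borel_measurable borel" unfolding T_def by measurable
    have eq: "lborel = density (distr lborel borel T) (\<lambda>_. \<bar>cc\<bar> ^ DIM('a))"
      unfolding T_def by (rule lborel_affine[OF cc0])
    have "(\<integral>x. f x \<partial>lborel) = (\<integral>x. f x \<partial>density (distr lborel borel T) (\<lambda>_. \<bar>cc\<bar> ^ DIM('a)))"
      using arg_cong[OF eq, of "\<lambda>M. integral\<^sup>L M f"] .
    also have "\<dots> = (\<integral>x. \<bar>cc\<bar> ^ DIM('a) *\<^sub>R f x \<partial>distr lborel borel T)"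
      by (rule integral_density) auto
    also have "\<dots> = (\<integral>x. \<bar>cc\<bar> ^ DIM('a) *\<^sub>R f (T x) \<partial>lborel)"
      by (rule integral_distr) auto
    also have "\<dots> = \<bar>cc\<bar> ^ DIM('a) *\<^sub>R (\<integral>x. f (T x) \<partial>lborel)" by simp
    finally have e1: "(\<integral>x. f x \<partial>lborel) = \<bar>cc\<bar> ^ DIM('a) *\<^sub>R (\<integral>x. f (T x) \<partial>lborel)" .
    have fT: "f (T x) = h (y0 - (1 / t) *\<^sub>R x) * complex_of_real (Gs x)" for x
    proof -
      have "t *\<^sub>R (y0 - T x) = x" using t by (simp add: T_def cc_def)
      moreover have "T x = y0 - (1 / t) *\<^sub>R x" by (simp add: T_def cc_def)
      ultimately show ?thesis by (simp add: f_def)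
    qed
    have "(\<integral>x. f x \<partial>lborel) = 0" using conv0[OF t] by (simp add: f_def)
    then have "\<bar>cc\<bar> ^ DIM('a) *\<^sub>R (\<integral>x. f (T x) \<partial>lborel) = 0" using e1 by simp
    then have "(\<integral>x. f (T x) \<partial>lborel) = 0" using cc0 by simp
    then show ?thesis by (simp only: fT)
  qed
  define s where "s = (\<lambda>n v. h (y0 - (1 / real (Suc n)) *\<^sub>R v) * complex_of_real (Gs v))"
  have s0: "(\<integral>v. s n v \<partial>lborel) = 0" for n unfolding s_def by (rule J0) simp
  have hc: "isCont h y0" using cont by (simp add: continuous_on_eq_continuous_at)
  have lim: "(\<lambda>n. \<integral>v. s n v \<partial>lborel) \<longlonglongrightarrow> (\<integral>v. h y0 * complex_of_real (Gs (v::'a)) \<partial>lborel)"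
  proof (rule Bochner_Integration.integral_dominated_convergence[of "\<lambda>v. h y0 * complex_of_real (Gs v)" lborel s "\<lambda>v. Bh * Gs v"])
    show "(\<lambda>v. h y0 * complex_of_real (Gs v)) \<in> borel_measurable lborel" by measurable
    show "s n \<in> borel_measurable lborel" for n
    proof -
      have "continuous_on UNIV (s n)" unfolding s_def
        by (intro continuous_intros continuous_on_compose2[OF cont] Gs_cont) auto
      then show ?thesis by (simp add: borel_measurable_continuous_onI)
    qed
    show "integrable lborel (\<lambda>v. Bh * Gs v)" by (intro integrable_mult_right Gs_int)
    show "AE v in lborel. (\<lambda>n. s n v) \<longlonglongrightarrow> h y0 * complex_of_real (Gs v)"
    proof (intro AE_I2)
      fix v :: 'a
      have "(\<lambda>n. 1 / real (Suc n)) \<longlonglongrightarrow> 0" by (rule LIMSEQ_Suc[OF lim_const_over_n])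
      then have "(\<lambda>n. y0 - (1 / real (Suc n)) *\<^sub>R v) \<longlonglongrightarrow> y0 - 0 *\<^sub>R v"
        by (intro tendsto_intros)
      then have "(\<lambda>n. y0 - (1 / real (Suc n)) *\<^sub>R v) \<longlonglongrightarrow> y0" by simp
      then have "(\<lambda>n. h (y0 - (1 / real (Suc n)) *\<^sub>R v)) \<longlonglongrightarrow> h y0"
        by (rule isCont_tendsto_compose[OF hc])
      then show "(\<lambda>n. s n v) \<longlonglongrightarrow> h y0 * complex_of_real (Gs v)"
        unfolding s_def by (intro tendsto_intros)
    qed
    show "AE v in lborel. norm (s n v) \<le> Bh * Gs v" for n
      by (intro AE_I2) (auto simp: s_def norm_mult Gs_nonneg intro: mult_right_mono bnd)
  qed
  have g1: "(\<integral>v. Gs (v::'a) \<partial>lborel) = 1" by (rule Gs_integral)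
  moreover have "(\<integral>v. h y0 * complex_of_real (Gs (v::'a)) \<partial>lborel) = h y0"
    using g1 by simp
  ultimately have "(\<lambda>n. 0) \<longlonglongrightarrow> h y0" using s0 lim by simp
  then show ?thesis using LIMSEQ_unique tendsto_const by blast
qed


(* ---- part 9 ---- *)

context setting
begin

lemma nondeg:
  assumes nz: "\<phi> \<noteq> (\<lambda>_. 0)"
  shows "\<exists>\<xi>. stft \<phi> u (0, \<xi>) \<noteq> 0"
proof (rule ccontr)
  assume "\<not> (\<exists>\<xi>. stft \<phi> u (0, \<xi>) \<noteq> 0)"
  then have z: "\<And>\<xi>. stft \<phi> u (0, \<xi>) = 0" by blast
  define h where "h = (\<lambda>y. u y * cnj (\<phi> y))"
  have fth: "ft h \<xi> = stft \<phi> u (0, \<xi>)" for \<xi> by (simp add: ft_def stft_def h_def)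
  have ch: "continuous_on UNIV h" unfolding h_def by (intro continuous_intros u_cont phi_cont)
  obtain Bh where Bh: "\<And>y. norm (\<phi> y) \<le> Bh" using phi_bounded by blast
  have bh: "norm (h y) \<le> Bh" for y
  proof -
    have "norm (h y) = norm (u y) * norm (\<phi> y)" by (simp add: h_def norm_mult)
    also have "\<dots> \<le> 1 * Bh" using norm_u[of y] Bh[of y] by (intro mult_mono) auto
    finally show ?thesis by simp
  qed
  have ih: "integrable lborel h" using prod_int[of 0] by (simp add: h_def)
  have "h y = 0" for y by (rule ft_zero_imp_zero[OF ch bh ih]) (simp add: fth z)
  then have "\<phi> y = 0" for y using \<open>h y = 0\<close> by (simp add: h_def u_def)
  then show False using nz by auto
qed

lemma stft_shift:
  assumes Aw: "A *v w = 0"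
  shows "norm (stft \<phi> u (x + w, \<xi>)) = norm (stft \<phi> u (x, \<xi>))"
proof -
  define g where "g = (\<lambda>y. u y * cnj (\<phi> (y - (x + w))) * exp (- \<i> * complex_of_real (y \<bullet> \<xi>)))"
  have cg: "continuous_on UNIV g" unfolding g_def
    by (intro continuous_intros u_cont continuous_on_compose2[OF phi_cont]) auto
  have [measurable]: "g \<in> borel_measurable borel" by (rule borel_measurable_continuous_onI[OF cg])
  have gw: "g (y + w) = exp (- \<i> * complex_of_real (w \<bullet> \<xi>)) * (u y * cnj (\<phi> (y - x)) * exp (- \<i> * complex_of_real (y \<bullet> \<xi>)))" for y
  proof -
    have "u (y + w) = u y" by (simp add: u_def q_ker[OF Aw])
    moreover have "y + w - (x + w) = y - x" by simp
    moreover have "exp (- \<i> * complex_of_real ((y + w) \<bullet> \<xi>)) = exp (- \<i> * complex_of_real (w \<bullet> \<xi>)) * exp (- \<i> * complex_of_real (y \<bullet> \<xi>))"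
      by (simp add: inner_add_left distrib_left exp_add[symmetric] add.commute)
    ultimately show ?thesis by (simp add: g_def mult_ac)
  qed
  have "stft \<phi> u (x + w, \<xi>) = (\<integral>y. g y \<partial>lborel)" by (simp add: stft_def g_def)
  also have "\<dots> = (\<integral>y. g (y + w) \<partial>lborel)" by (rule integral_translate[symmetric]) measurable
  also have "\<dots> = exp (- \<i> * complex_of_real (w \<bullet> \<xi>)) * stft \<phi> u (x, \<xi>)"
    by (simp only: gw integral_mult_right_zero) (simp add: stft_def)
  finally show ?thesis by (simp add: norm_mult)
qed

lemma WF_supset:
  assumes nz: "\<phi> \<noteq> (\<lambda>_. 0)" and Ax: "A *v x0 = 0" and x0: "x0 \<noteq> 0"
  shows "(x0, 0) \<in> gabor_WF \<phi> u"
proof -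
  have ne: "(x0, 0::real^'n) \<noteq> 0" using x0 by (simp add: zero_prod_def)
  have "\<not> (\<exists>\<Gamma>. open \<Gamma> \<and> conic \<Gamma> \<and> 0 \<notin> \<Gamma> \<and> (x0, 0) \<in> \<Gamma> \<and>
           (\<forall>N::real. N \<ge> 0 \<longrightarrow> (\<exists>C. \<forall>z\<in>\<Gamma>. jbr z powr N * norm (stft \<phi> u z) \<le> C)))"
  proof
    assume "\<exists>\<Gamma>. open \<Gamma> \<and> conic \<Gamma> \<and> 0 \<notin> \<Gamma> \<and> (x0, 0) \<in> \<Gamma> \<and>
           (\<forall>N::real. N \<ge> 0 \<longrightarrow> (\<exists>C. \<forall>z\<in>\<Gamma>. jbr z powr N * norm (stft \<phi> u z) \<le> C))"
    then obtain \<Gamma> where op: "open \<Gamma>" and co: "conic \<Gamma>" and z0: "(x0, 0) \<in> \<Gamma>"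
      and bd: "\<forall>N::real. N \<ge> 0 \<longrightarrow> (\<exists>C. \<forall>z\<in>\<Gamma>. jbr z powr N * norm (stft \<phi> u z) \<le> C)" by blast
    have "\<exists>C. \<forall>z\<in>\<Gamma>. jbr z powr 1 * norm (stft \<phi> u z) \<le> C" using bd[rule_format, of 1] by simp
    then obtain C where C: "\<And>z. z \<in> \<Gamma> \<Longrightarrow> jbr z powr 1 * norm (stft \<phi> u z) \<le> C" by blast
    obtain \<xi>1 where xi1: "stft \<phi> u (0, \<xi>1) \<noteq> 0" using nondeg[OF nz] by blast
    define v where "v = norm (stft \<phi> u (0, \<xi>1))"
    have v0: "0 < v" using xi1 by (simp add: v_def)
    obtain e where e: "0 < e" "ball (x0, 0) e \<subseteq> \<Gamma>" using op z0 open_contains_ball by blast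
    have nx0: "0 < norm x0" using x0 by simp
    define t where "t = max 1 (max (2 * norm \<xi>1 / e) ((\<bar>C\<bar> + 1) / (norm x0 * v))) + 1"
    have t1: "1 < t" unfolding t_def by simp
    have t2: "2 * norm \<xi>1 / e < t" unfolding t_def by simp
    have t3: "(\<bar>C\<bar> + 1) / (norm x0 * v) < t" unfolding t_def by simp
    define p where "p = (x0, (1 / t) *\<^sub>R \<xi>1)"
    have "dist (x0, 0) p = norm \<xi>1 / t" using t1 by (simp add: p_def dist_Pair_Pair dist_norm)
    also have "\<dots> < e"
    proof -
      have "norm \<xi>1 * 2 < t * e" using t2 e(1) by (simp add: field_simps)
      then have "norm \<xi>1 < t * e" using norm_ge_zero[of \<xi>1] by linarith
      then show ?thesis using t1 by (simp add: field_simps)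
    qed
    finally have "p \<in> \<Gamma>" using e(2) by auto
    then have zG: "t *\<^sub>R p \<in> \<Gamma>" using co t1 unfolding conic_def by auto
    have zp: "t *\<^sub>R p = (0 + t *\<^sub>R x0, \<xi>1)" using t1 by (simp add: p_def)
    have "norm (stft \<phi> u (t *\<^sub>R p)) = v"
      unfolding zp v_def by (rule stft_shift) (simp add: Ax matrix_vector_mult_scaleR)
    moreover have "t * norm x0 \<le> jbr (t *\<^sub>R p)"
    proof -
      have "t * norm x0 = norm (fst (t *\<^sub>R p))" using t1 by (simp add: p_def)
      also have "\<dots> \<le> norm (t *\<^sub>R p)"
        by (cases "t *\<^sub>R p") (simp add: norm_Pair real_sqrt_sum_squares_ge1)
      also have "\<dots> \<le> jbr (t *\<^sub>R p)" unfolding jbr_def by (rule real_le_rsqrt) simp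
      finally show ?thesis .
    qed
    moreover have "jbr (t *\<^sub>R p) powr 1 = jbr (t *\<^sub>R p)" using jbr_ge1[of "t *\<^sub>R p"] by (simp only: powr_one_gt_zero_iff)
    ultimately have "t * norm x0 * v \<le> C" using C[OF zG] v0 by (smt (verit) mult_right_mono)
    moreover have "\<bar>C\<bar> + 1 < t * (norm x0 * v)" using t3 nx0 v0 by (simp add: field_simps)
    ultimately show False by (simp add: mult_ac)
  qed
  then show ?thesis using ne unfolding gabor_WF_def by blast
qed

end

theorem mainTheorem11:
  fixes A :: "real^'n^'n" and \<phi> :: "real^'n \<Rightarrow> complex"
  assumes "transpose A = A"
    and "\<forall>x. 0 \<le> x \<bullet> (A *v x)"
    and "schwartz \<phi>" and "\<phi> \<noteq> (\<lambda>_. 0)"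
  shows "gabor_WF \<phi> (\<lambda>y. complex_of_real (exp (- (y \<bullet> (A *v y)))))
           = {(x, 0) | x. A *v x = 0 \<and> x \<noteq> 0}"
proof -
  interpret setting A \<phi> by unfold_locales (use assms in auto)
  show ?thesis unfolding u_eq
    using WF_subset WF_supset[OF assms(4)] by blast
qed


end
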